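(* The following problem is decidable: given Fibonacci-synchronized sequences $(a(n))_{n\ge0}$ and $(b(n))_{n\ge0}$ (each specified by a synchronized automaton), decide whether $(a(n))_{n\ge 0}$ is a permutation of $(b(n))_{n\ge 0}$, i.e., whether there is a bijection $\sigma:\mathbb{N}\to\mathbb{N}$ with $a(n)=b(\sigma(n))$ for all $n$.
   Context: $\mathbb{N}=\{0,1,2,\ldots\}$. The Fibonacci (Zeckendorf) representation of $n\in\mathbb{N}$ is the binary string $e_1\cdots e_t$ with no two consecutive $1$'s and $n=\sum_{i=1}^t e_iF_{t-i+2}$ (where $F_0=0,F_1=1,F_k=F_{k-1}+F_{k-2}$), leading zeros being allowed/ignored. A sequence $s:\mathbb{N}\to\mathbb{N}$ is Fibonacci-synchronized if there is a deterministic finite automaton over the alphabet $\{0,1\}^2$ which, reading the Fibonacci representations of a pair $(n,x)$ in parallel (most significant digit first, the shorter one padded with leading zeros), accepts if and only if $x=s(n)$; such an automaton is called a synchronized automaton for $s$. *)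

theory Defs
  imports Main "HOL-Number_Theory.Fib" "HOL-Library.Nat_Bijection"
begin

text \<open>A digit string is a list of booleans, most significant digit first
 (True = 1). Value: digit e_i (1-based, i = 1..t) has weight F_(t-i+2).\<close>

definition zeck_val :: "bool list \<Rightarrow> nat" where
  "zeck_val w = (\<Sum>i<length w. if w ! i then fib (length w - i + 1) else 0)"

definition no_adj_ones :: "bool list \<Rightarrow> bool" where
  "no_adj_ones w \<longleftrightarrow> (\<forall>i. Suc i < length w \<longrightarrow> \<not> (w ! i \<and> w ! Suc i))"

definition fib_rep :: "nat \<Rightarrow> bool list" where
  "fib_rep n = (THE w. no_adj_ones w \<and> (w = [] \<or> hd w) \<and> zeck_val w = n)"

definition pad_pair :: "bool list \<Rightarrow> bool list \<Rightarrow> (bool \<times> bool) list" where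
  "pad_pair u v = (let m = max (length u) (length v) in
     zip (replicate (m - length u) False @ u) (replicate (m - length v) False @ v))"

text \<open>DFA k q0 tr fin: states 0..k-1, initial state q0, transition from state q
 on letter (c1,c2) is tr ! (4*q + 2*c1 + c2), final states given by fin.\<close>
datatype dfa = DFA (nstates: nat) (init: nat) (trans: "nat list") (final: "bool list")

definition dfa_wf :: "dfa \<Rightarrow> bool" where
  "dfa_wf A \<longleftrightarrow> init A < nstates A \<and> length (trans A) = 4 * nstates A
     \<and> (\<forall>q \<in> set (trans A). q < nstates A) \<and> length (final A) = nstates A"

definition dfa_step :: "dfa \<Rightarrow> nat \<Rightarrow> bool \<times> bool \<Rightarrow> nat" where
  "dfa_step A q c = trans A ! (4 * q + 2 * (if fst c then 1 else 0) + (if snd c then 1 else 0))"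

definition dfa_accepts :: "dfa \<Rightarrow> (bool \<times> bool) list \<Rightarrow> bool" where
  "dfa_accepts A w \<longleftrightarrow> final A ! foldl (dfa_step A) (init A) w"

definition fib_synchronized_by :: "dfa \<Rightarrow> (nat \<Rightarrow> nat) \<Rightarrow> bool" where
  "fib_synchronized_by A s \<longleftrightarrow> dfa_wf A \<and>
     (\<forall>n x. dfa_accepts A (pad_pair (fib_rep n) (fib_rep x)) \<longleftrightarrow> x = s n)"

definition dfa_code :: "dfa \<Rightarrow> nat" where
  "dfa_code A = list_encode ([nstates A, init A] @ trans A
       @ map (\<lambda>b. if b then 1 else 0) (final A))"

definition is_perm_of :: "(nat \<Rightarrow> nat) \<Rightarrow> (nat \<Rightarrow> nat) \<Rightarrow> bool" where
  "is_perm_of a b \<longleftrightarrow> (\<exists>\<sigma>::nat \<Rightarrow> nat. bij \<sigma> \<and> (\<forall>n. a n = b (\<sigma> n)))"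

datatype recf = Zero | Succ | Proj nat | Comp recf "recf list" | PrimRec recf recf | Minim recf

inductive rf_eval :: "recf \<Rightarrow> nat list \<Rightarrow> nat \<Rightarrow> bool" where
  zero: "rf_eval Zero xs 0"
| succ: "rf_eval Succ (x # xs) (Suc x)"
| proj: "i < length xs \<Longrightarrow> rf_eval (Proj i) xs (xs ! i)"
| comp: "length ys = length gs \<Longrightarrow> (\<forall>i < length gs. rf_eval (gs ! i) xs (ys ! i))
          \<Longrightarrow> rf_eval f ys z \<Longrightarrow> rf_eval (Comp f gs) xs z"
| pr0: "rf_eval f xs z \<Longrightarrow> rf_eval (PrimRec f g) (0 # xs) z"
| prS: "rf_eval (PrimRec f g) (n # xs) y \<Longrightarrow> rf_eval g (n # y # xs) z
          \<Longrightarrow> rf_eval (PrimRec f g) (Suc n # xs) z"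
| mn: "rf_eval f (n # xs) 0 \<Longrightarrow> (\<forall>m < n. \<exists>y. 0 < y \<and> rf_eval f (m # xs) y)
          \<Longrightarrow> rf_eval (Minim f) xs n"

end

theory Submission
  imports Defs Complex_Main "HOL-Library.Function_Algebras" "HOL-Library.Infinite_Set"
begin


primrec ev :: "recf \<Rightarrow> nat list \<Rightarrow> nat" where
  "ev Zero xs = 0"
| "ev Succ xs = Suc (hd xs)"
| "ev (Proj i) xs = xs ! i"
| "ev (Comp f gs) xs = ev f (map (\<lambda>g. ev g xs) gs)"
| "ev (PrimRec f g) xs = (case xs of [] \<Rightarrow> 0 | n # ys \<Rightarrow> rec_nat (ev f ys) (\<lambda>m y. ev g (m # y # ys)) n)"
| "ev (Minim f) xs = 0"

primrec ar :: "recf \<Rightarrow> nat \<Rightarrow> bool" where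
  "ar Zero k = True"
| "ar Succ k = (1 \<le> k)"
| "ar (Proj i) k = (i < k)"
| "ar (Comp f gs) k = (ar f (length gs) \<and> list_all (\<lambda>g. ar g k) gs)"
| "ar (PrimRec f g) k = (1 \<le> k \<and> ar f (k - 1) \<and> ar g (k + 1))"
| "ar (Minim f) k = False"

lemma ev_correct: "ar r (length xs) \<Longrightarrow> rf_eval r xs (ev r xs)"
proof (induction r arbitrary: xs)
  case Zero then show ?case by (simp add: rf_eval.zero)
next
  case Succ then show ?case by (cases xs) (auto intro: rf_eval.succ)
next
  case (Proj i) then show ?case using rf_eval.proj[of i xs] by simp
next
  case (Comp f gs)
  show ?case
  proof (rule rf_eval.comp[of "map (\<lambda>g. ev g xs) gs"])
    show "length (map (\<lambda>g. ev g xs) gs) = length gs" by simp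
    show "\<forall>i<length gs. rf_eval (gs ! i) xs (map (\<lambda>g. ev g xs) gs ! i)"
      using Comp by (auto simp: nth_mem list_all_iff)
    show "rf_eval f (map (\<lambda>g. ev g xs) gs) (ev (Comp f gs) xs)"
      using Comp by simp
  qed
next
  case (PrimRec f g)
  then obtain n ys where xs: "xs = n # ys" by (cases xs) auto
  have "rf_eval (PrimRec f g) (n # ys) (rec_nat (ev f ys) (\<lambda>m y. ev g (m # y # ys)) n)"
  proof (induction n)
    case 0 then show ?case using PrimRec xs by (auto intro: rf_eval.pr0)
  next
    case (Suc n) then show ?case using PrimRec xs by (auto intro: rf_eval.prS)
  qed
  then show ?case using xs by simp
next
  case (Minim f) then show ?case by simp
qed

fun rc :: "nat \<Rightarrow> recf" where
  "rc 0 = Zero" | "rc (Suc k) = Comp Succ [rc k]"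

lemma rc_ev[simp]: "ev (rc k) xs = k" by (induction k) auto
lemma rc_ar[simp]: "ar (rc k) n" by (induction k) auto

definition "r_add = PrimRec (Proj 0) (Comp Succ [Proj 1])"
lemma r_add_ar[simp]: "ar r_add (Suc (Suc 0))" by (simp add: r_add_def)
lemma r_add_ev[simp]: "ev r_add [x, y] = x + y"
  by (induction x) (simp_all add: r_add_def)

definition "r_mult = PrimRec Zero (Comp r_add [Proj 1, Proj 2])"
lemma r_mult_ar[simp]: "ar r_mult (Suc (Suc 0))" by (simp add: r_mult_def)
lemma r_mult_ev[simp]: "ev r_mult [x, y] = x * y"
  by (induction x) (simp_all add: r_mult_def)

definition "r_pred = PrimRec Zero (Proj 0)"
lemma r_pred_ar[simp]: "ar r_pred (Suc 0)" by (simp add: r_pred_def)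
lemma r_pred_ev[simp]: "ev r_pred [x] = x - 1"
  by (cases x) (simp_all add: r_pred_def)

definition "r_subr = PrimRec (Proj 0) (Comp r_pred [Proj 1])"
lemma r_subr_ar[simp]: "ar r_subr (Suc (Suc 0))" by (simp add: r_subr_def)
lemma r_subr_ev[simp]: "ev r_subr [y, x] = x - y"
  by (induction y) (simp_all add: r_subr_def)

definition "r_sub = Comp r_subr [Proj 1, Proj 0]"
lemma r_sub_ar[simp]: "ar r_sub (Suc (Suc 0))" by (simp add: r_sub_def)
lemma r_sub_ev[simp]: "ev r_sub [x, y] = x - y"
  by (simp add: r_sub_def)

definition "r_cond = PrimRec (Proj 1) (Proj 2)"
lemma r_cond_ar[simp]: "ar r_cond (Suc (Suc (Suc 0)))" by (simp add: r_cond_def)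
lemma r_cond_ev[simp]: "ev r_cond [c, x, y] = (if c = 0 then y else x)"
  by (cases c) (simp_all add: r_cond_def)

definition "r_isz = PrimRec (rc 1) Zero"
lemma r_isz_ar[simp]: "ar r_isz (Suc 0)" by (simp add: r_isz_def)
lemma r_isz_ev[simp]: "ev r_isz [c] = (if c = 0 then 1 else 0)"
  by (cases c) (simp_all add: r_isz_def)

definition "r_le = Comp r_isz [r_sub]"
lemma r_le_ar[simp]: "ar r_le (Suc (Suc 0))" by (simp add: r_le_def)
lemma r_le_ev[simp]: "ev r_le [x, y] = (if x \<le> y then 1 else 0)"
  by (simp add: r_le_def)

definition "r_eq = Comp r_mult [r_le, Comp r_le [Proj 1, Proj 0]]"
lemma r_eq_ar[simp]: "ar r_eq (Suc (Suc 0))" by (simp add: r_eq_def)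
lemma r_eq_ev[simp]: "ev r_eq [x, y] = (if x = y then 1 else 0)"
  by (simp add: r_eq_def)

definition "r_max = Comp r_cond [r_le, Proj 1, Proj 0]"
lemma r_max_ar[simp]: "ar r_max (Suc (Suc 0))" by (simp add: r_max_def)
lemma r_max_ev[simp]: "ev r_max [x, y] = max x y"
  by (simp add: r_max_def)

definition rsum :: "nat \<Rightarrow> recf \<Rightarrow> recf" where
  "rsum k g = PrimRec Zero (Comp r_add [Proj 1, Comp g (Proj 0 # map (\<lambda>j. Proj (j+2)) [0..<k])])"

lemma rsum_ar[simp]: "ar g (Suc k) \<Longrightarrow> ar (rsum k g) (Suc k)"
  by (simp add: rsum_def list_all_iff)

lemma map_proj_shift: "length xs = k \<Longrightarrow> map ((\<lambda>g. ev g (a # b # xs)) \<circ> (\<lambda>j. Proj (Suc (Suc j)))) [0..<k] = xs"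
  by (rule nth_equalityI) auto

lemma rsum_ev[simp]: "length xs = k \<Longrightarrow> ev (rsum k g) (n # xs) = (\<Sum>i<n. ev g (i # xs))"
  by (induction n) (simp_all add: rsum_def map_proj_shift[of xs k])

definition "r_pow2 = PrimRec (rc 1) (Comp r_add [Proj 1, Proj 1])"
lemma r_pow2_ar[simp]: "ar r_pow2 (Suc 0)" by (simp add: r_pow2_def)
lemma r_pow2_ev[simp]: "ev r_pow2 [n] = 2 ^ n"
  by (induction n) (simp_all add: r_pow2_def)

definition "r_tri = PrimRec Zero (Comp r_add [Proj 1, Comp Succ [Proj 0]])"
lemma r_tri_ar[simp]: "ar r_tri (Suc 0)" by (simp add: r_tri_def)
lemma r_tri_ev[simp]: "ev r_tri [n] = triangle n"
  by (induction n) (simp_all add: r_tri_def)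

definition "r_penc = Comp r_add [Comp r_tri [r_add], Proj 0]"
lemma r_penc_ar[simp]: "ar r_penc (Suc (Suc 0))" by (simp add: r_penc_def)
lemma r_penc_ev[simp]: "ev r_penc [x, y] = prod_encode (x, y)"
  by (simp add: r_penc_def prod_encode_def)

definition kk :: "nat \<Rightarrow> nat" where "kk m = (\<Sum>j<m. if triangle (Suc j) \<le> m then 1 else 0)"
definition pfst :: "nat \<Rightarrow> nat" where "pfst m = m - triangle (kk m)"
definition psnd :: "nat \<Rightarrow> nat" where "psnd m = kk m - pfst m"

definition "r_kk = Comp (rsum 1 (Comp r_le [Comp r_tri [Comp Succ [Proj 0]], Proj 1])) [Proj 0, Proj 0]"
lemma r_kk_ar[simp]: "ar r_kk (Suc 0)" by (simp add: r_kk_def)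
lemma r_kk_ev[simp]: "ev r_kk [m] = kk m"
  by (simp add: r_kk_def kk_def)

definition "r_pfst = Comp r_sub [Proj 0, Comp r_tri [r_kk]]"
lemma r_pfst_ar[simp]: "ar r_pfst (Suc 0)" by (simp add: r_pfst_def)
lemma r_pfst_ev[simp]: "ev r_pfst [m] = pfst m"
  by (simp add: r_pfst_def pfst_def)

definition "r_psnd = Comp r_sub [r_kk, r_pfst]"
lemma r_psnd_ar[simp]: "ar r_psnd (Suc 0)" by (simp add: r_psnd_def)
lemma r_psnd_ev[simp]: "ev r_psnd [m] = psnd m"
  by (simp add: r_psnd_def psnd_def)

lemma le_triangle: "n \<le> triangle n" by (induction n) auto

lemma triangle_mono: "a \<le> b \<Longrightarrow> triangle a \<le> triangle b"
  by (induction b) (auto simp: le_Suc_eq)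

lemma prod_decode_pfst_psnd: "prod_decode m = (pfst m, psnd m)"
proof -
  obtain x y where xy: "prod_decode m = (x, y)" by (cases "prod_decode m")
  have m: "m = triangle (x + y) + x"
    using prod_decode_inverse[of m] xy by (simp add: prod_encode_def)
  have le: "x + y \<le> m" using le_triangle[of "x+y"] m by simp
  have P: "\<forall>j<m. (triangle (Suc j) \<le> m) = (j < x + y)"
  proof (intro allI impI)
    fix j assume "j < m"
    show "(triangle (Suc j) \<le> m) = (j < x + y)"
    proof
      assume a: "triangle (Suc j) \<le> m"
      show "j < x + y"
      proof (rule ccontr)
        assume "\<not> j < x + y"
        then have "triangle (Suc (x+y)) \<le> triangle (Suc j)" by (intro triangle_mono) simp
        then show False using a m by simp
      qed
    next
      assume "j < x + y"
      then have "triangle (Suc j) \<le> triangle (x+y)" by (intro triangle_mono) simp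
      then show "triangle (Suc j) \<le> m" using m by simp
    qed
  qed
  have "kk m = (\<Sum>j<m. if j < x + y then 1 else 0)"
    unfolding kk_def by (rule sum.cong) (use P in auto)
  also have "\<dots> = card ({..<m} \<inter> {j. j < x + y})"
    by (simp add: sum.If_cases)
  also have "{..<m} \<inter> {j. j < x + y} = {..<x+y}" using le by auto
  finally have "kk m = x + y" by simp
  then show ?thesis using xy m by (simp add: pfst_def psnd_def)
qed

definition lhd :: "nat \<Rightarrow> nat" where "lhd c = pfst (c - 1)"
definition ltl :: "nat \<Rightarrow> nat" where "ltl c = psnd (c - 1)"

lemma lhd_enc[simp]: "lhd (list_encode (x # xs)) = x"
  using prod_decode_pfst_psnd[of "prod_encode (x, list_encode xs)"]
  by (simp add: lhd_def)
lemma ltl_enc[simp]: "ltl (list_encode (x # xs)) = list_encode xs"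
  using prod_decode_pfst_psnd[of "prod_encode (x, list_encode xs)"]
  by (simp add: ltl_def)

definition lnth :: "nat \<Rightarrow> nat \<Rightarrow> nat" where "lnth c i = lhd ((ltl ^^ i) c)"

lemma ltl_pow_enc: "i \<le> length L \<Longrightarrow> (ltl ^^ i) (list_encode L) = list_encode (drop i L)"
proof (induction i arbitrary: L)
  case 0 then show ?case by simp
next
  case (Suc i)
  then obtain x xs where L: "L = x # xs" by (cases L) auto
  have "(ltl ^^ Suc i) (list_encode L) = (ltl ^^ i) (ltl (list_encode L))"
    by (simp add: funpow_Suc_right del: funpow.simps)
  also have "\<dots> = (ltl ^^ i) (list_encode xs)" using L by (simp del: list_encode.simps)
  also have "\<dots> = list_encode (drop i xs)" using Suc L by simp
  finally show ?case using L by simp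
qed

lemma lnth_enc: "i < length L \<Longrightarrow> lnth (list_encode L) i = L ! i"
  unfolding lnth_def using ltl_pow_enc[of i L]
  by (simp add: Cons_nth_drop_Suc[symmetric] del: list_encode.simps)

definition "r_lhd = Comp r_pfst [Comp r_pred [Proj 0]]"
lemma r_lhd_ar[simp]: "ar r_lhd (Suc 0)" by (simp add: r_lhd_def)
lemma r_lhd_ev[simp]: "ev r_lhd [c] = lhd c" by (simp add: r_lhd_def lhd_def)

definition "r_ltl = Comp r_psnd [Comp r_pred [Proj 0]]"
lemma r_ltl_ar[simp]: "ar r_ltl (Suc 0)" by (simp add: r_ltl_def)
lemma r_ltl_ev[simp]: "ev r_ltl [c] = ltl c" by (simp add: r_ltl_def ltl_def)

definition "r_ltls = PrimRec (Proj 0) (Comp r_ltl [Proj 1])"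
lemma r_ltls_ar[simp]: "ar r_ltls (Suc (Suc 0))" by (simp add: r_ltls_def)
lemma r_ltls_ev[simp]: "ev r_ltls [i, c] = (ltl ^^ i) c"
  by (induction i) (simp_all add: r_ltls_def)

definition "r_lnth = Comp r_lhd [Comp r_ltls [Proj 1, Proj 0]]"
lemma r_lnth_ar[simp]: "ar r_lnth (Suc (Suc 0))" by (simp add: r_lnth_def)
lemma r_lnth_ev[simp]: "ev r_lnth [c, i] = lnth c i" by (simp add: r_lnth_def lnth_def)

definition "r_fibp = PrimRec (rc (prod_encode (0, 1)))
   (Comp r_penc [Comp r_psnd [Proj 1], Comp r_add [Comp r_pfst [Proj 1], Comp r_psnd [Proj 1]]])"
lemma r_fibp_ar[simp]: "ar r_fibp (Suc 0)" by (simp add: r_fibp_def)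
lemma r_fibp_ev: "ev r_fibp [n] = prod_encode (fib n, fib (Suc n))"
proof (induction n)
  case 0 then show ?case by (simp add: r_fibp_def)
next
  case (Suc n)
  have d: "pfst (prod_encode (a, b)) = a" "psnd (prod_encode (a, b)) = b" for a b
    using prod_decode_pfst_psnd[of "prod_encode (a,b)"] by auto
  show ?case using Suc by (simp add: r_fibp_def d)
qed

definition "r_fib = Comp r_pfst [r_fibp]"
lemma r_fib_ar[simp]: "ar r_fib (Suc 0)" by (simp add: r_fib_def)
lemma r_fib_ev[simp]: "ev r_fib [n] = fib n"
proof -
  have d: "pfst (prod_encode (a, b)) = a" for a b
    using prod_decode_pfst_psnd[of "prod_encode (a,b)"] by auto
  show ?thesis by (simp add: r_fib_def r_fibp_ev d)
qed

lemma zeck_val_Nil[simp]: "zeck_val [] = 0" by (simp add: zeck_val_def)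

lemma zeck_val_Cons[simp]: "zeck_val (b # w) = (if b then fib (length w + 2) else 0) + zeck_val w"
proof -
  have e: "(\<Sum>i<length w. if w ! i then fib (Suc (length w) - Suc i + 1) else 0) =
     (\<Sum>i<length w. if w ! i then fib (length w - i + 1) else 0)"
    by (rule sum.cong) (simp_all only: diff_Suc_Suc)
  show ?thesis
    unfolding zeck_val_def length_Cons sum.lessThan_Suc_shift nth_Cons_Suc nth_Cons_0 e
    by simp
qed

lemma zeck_val_replicate[simp]: "zeck_val (replicate k False @ w) = zeck_val w"
  by (induction k) auto

lemma no_adj_Nil[simp]: "no_adj_ones []" by (simp add: no_adj_ones_def)

lemma no_adj_Cons: "no_adj_ones (b # w) \<longleftrightarrow> (b \<longrightarrow> w = [] \<or> \<not> hd w) \<and> no_adj_ones w"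
proof
  assume H: "no_adj_ones (b # w)"
  have h: "\<And>i. Suc i < Suc (length w) \<Longrightarrow> \<not> ((b # w) ! i \<and> (b # w) ! Suc i)"
    using H unfolding no_adj_ones_def by simp
  have "b \<longrightarrow> w = [] \<or> \<not> hd w"
  proof (cases w)
    case (Cons c w') then show ?thesis using h[of 0] by simp
  qed simp
  moreover have "no_adj_ones w" unfolding no_adj_ones_def
  proof (intro allI impI)
    fix i assume "Suc i < length w"
    then show "\<not> (w ! i \<and> w ! Suc i)" using h[of "Suc i"] by simp
  qed
  ultimately show "(b \<longrightarrow> w = [] \<or> \<not> hd w) \<and> no_adj_ones w" by blast
next
  assume H: "(b \<longrightarrow> w = [] \<or> \<not> hd w) \<and> no_adj_ones w"
  show "no_adj_ones (b # w)" unfolding no_adj_ones_def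
  proof (intro allI impI)
    fix i assume i: "Suc i < length (b # w)"
    show "\<not> ((b # w) ! i \<and> (b # w) ! Suc i)"
    proof (cases i)
      case 0 then show ?thesis using H i by (cases w) auto
    next
      case (Suc j) then show ?thesis using H i unfolding no_adj_ones_def by simp
    qed
  qed
qed

lemma no_adj_Cons_simps[simp]:
  "no_adj_ones [b]"
  "no_adj_ones (False # w) \<longleftrightarrow> no_adj_ones w"
  "no_adj_ones (True # c # w) \<longleftrightarrow> \<not> c \<and> no_adj_ones (c # w)"
  by (auto simp: no_adj_Cons)

lemma no_adj_append: "no_adj_ones (u @ v) \<longleftrightarrow>
   no_adj_ones u \<and> no_adj_ones v \<and> \<not> (u \<noteq> [] \<and> v \<noteq> [] \<and> last u \<and> hd v)"
  by (induction u) (auto simp: no_adj_Cons)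

lemma no_adj_replicate[simp]: "no_adj_ones (replicate k False @ w) \<longleftrightarrow> no_adj_ones w"
  by (induction k) auto

lemma fib_Suc2: "fib (Suc (Suc n)) = fib (Suc n) + fib n" by simp

lemma zeck_val_bound: "no_adj_ones w \<Longrightarrow> zeck_val w < fib (length w + 2)"
proof (induction w rule: length_induct)
  case (1 w)
  show ?case
  proof (cases w)
    case Nil then show ?thesis by simp
  next
    case (Cons b w')
    show ?thesis
    proof (cases b)
      case False
      then have "zeck_val w' < fib (length w' + 2)" using 1 Cons by (auto simp: no_adj_Cons)
      moreover have "fib (length w' + 2) \<le> fib (length w + 2)" using Cons by (intro fib_mono) simp
      ultimately show ?thesis using Cons False by simp
    next
      case True
      show ?thesis
      proof (cases w')
        case Nil then show ?thesis using Cons True by (simp add: numeral_2_eq_2)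
      next
        case (Cons c w'')
        with \<open>w = b # w'\<close> True 1 have c: "\<not> c" and na: "no_adj_ones w''"
          by (auto simp: no_adj_Cons)
        have "zeck_val w'' < fib (length w'' + 2)" using 1 na \<open>w = b # w'\<close> Cons by auto
        then show ?thesis using \<open>w = b # w'\<close> True Cons c
          by (simp add: numeral_2_eq_2)
      qed
    qed
  qed
qed

lemma zeck_val_lower: "w \<noteq> [] \<Longrightarrow> hd w \<Longrightarrow> fib (length w + 1) \<le> zeck_val w"
  by (cases w) auto

lemma zeck_unique_len:
  "no_adj_ones u \<Longrightarrow> no_adj_ones v \<Longrightarrow> length u = length v \<Longrightarrow> zeck_val u = zeck_val v \<Longrightarrow> u = v"
proof (induction u arbitrary: v)
  case Nil then show ?case by simp
next
  case (Cons a u)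
  then obtain b v' where v: "v = b # v'" by (cases v) auto
  have nu: "no_adj_ones u" and nv: "no_adj_ones v'" using Cons v by (auto simp: no_adj_Cons)
  have bu: "zeck_val u < fib (length u + 2)" using zeck_val_bound[OF nu] .
  have bv: "zeck_val v' < fib (length u + 2)" using zeck_val_bound[OF nv] Cons v by simp
  have "a = b"
  proof (rule ccontr)
    assume "a \<noteq> b"
    then show False using Cons.prems v bu bv by (cases a; cases b) auto
  qed
  then have "zeck_val u = zeck_val v'" using Cons.prems v by (auto split: if_splits)
  then have "u = v'" using Cons.IH[OF nu nv] Cons.prems v by simp
  then show ?case using v \<open>a = b\<close> by simp
qed

lemma zeck_exists_len: "n < fib (L + 2) \<Longrightarrow> \<exists>w. no_adj_ones w \<and> length w = L \<and> zeck_val w = n"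
proof (induction L arbitrary: n rule: less_induct)
  case (less L)
  show ?case
  proof (cases L)
    case 0 then show ?thesis using less.prems by (intro exI[of _ "[]"]) (simp add: numeral_2_eq_2)
  next
    case (Suc L')
    show ?thesis
    proof (cases "n < fib (L' + 2)")
      case True
      then obtain w where "no_adj_ones w" "length w = L'" "zeck_val w = n" using less Suc by blast
      then show ?thesis using Suc by (intro exI[of _ "False # w"]) simp
    next
      case False
      show ?thesis
      proof (cases L')
        case 0
        then have "n = 1" using False less.prems Suc by (simp add: numeral_2_eq_2 numeral_3_eq_3)
        then show ?thesis using Suc 0 by (intro exI[of _ "[True]"]) (simp add: numeral_2_eq_2)
      next
        case (Suc L'')
        have "n < fib (L + 2)" by fact
        then have "n - fib (L' + 2) < fib (L'' + 2)" using False Suc \<open>L = Suc L'\<close>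
          by (simp add: numeral_2_eq_2)
        then obtain w where w: "no_adj_ones w" "length w = L''" "zeck_val w = n - fib (L' + 2)"
          using less.IH[of L'' "n - fib (L' + 2)"] Suc \<open>L = Suc L'\<close> by auto
        show ?thesis using w Suc \<open>L = Suc L'\<close> False
          by (intro exI[of _ "True # False # w"]) (simp add: numeral_2_eq_2)
      qed
    qed
  qed
qed

definition canon :: "bool list \<Rightarrow> bool" where
  "canon w \<longleftrightarrow> no_adj_ones w \<and> (w = [] \<or> hd w)"

lemma canon_unique: "canon u \<Longrightarrow> canon v \<Longrightarrow> zeck_val u = zeck_val v \<Longrightarrow> u = v"
proof -
  assume cu: "canon u" and cv: "canon v" and e: "zeck_val u = zeck_val v"
  have len: "length u = length v"
  proof (rule ccontr)
    assume "length u \<noteq> length v"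
    then consider "length u < length v" | "length v < length u" by linarith
    then show False
    proof cases
      case 1
      then have "v \<noteq> []" by auto
      then have "fib (length v + 1) \<le> zeck_val v" using cv zeck_val_lower canon_def by auto
      moreover have "zeck_val u < fib (length u + 2)" using cu zeck_val_bound canon_def by auto
      moreover have "fib (length u + 2) \<le> fib (length v + 1)" using 1 by (intro fib_mono) simp
      ultimately show False using e by simp
    next
      case 2
      then have "u \<noteq> []" by auto
      then have "fib (length u + 1) \<le> zeck_val u" using cu zeck_val_lower canon_def by auto
      moreover have "zeck_val v < fib (length v + 2)" using cv zeck_val_bound canon_def by auto
      moreover have "fib (length v + 2) \<le> fib (length u + 1)" using 2 by (intro fib_mono) simp
      ultimately show False using e by simp
    qed
  qed
  show "u = v" using zeck_unique_len[OF _ _ len e] cu cv by (simp add: canon_def)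
qed

lemma dropWhile_canon: "no_adj_ones w \<Longrightarrow> canon (dropWhile Not w)"
proof (induction w)
  case Nil then show ?case by (simp add: canon_def)
next
  case (Cons a w) then show ?case by (cases a) (auto simp: canon_def no_adj_Cons)
qed

lemma dropWhile_split: "w = replicate (length w - length (dropWhile Not w)) False @ dropWhile Not w"
proof (induction w)
  case Nil then show ?case by simp
next
  case (Cons a w)
  show ?case
  proof (cases a)
    case True then show ?thesis by simp
  next
    case False
    have "length (dropWhile Not w) \<le> length w" by (simp add: length_dropWhile_le)
    then have "length (a # w) - length (dropWhile Not (a # w)) = Suc (length w - length (dropWhile Not w))"
      using False by simp
    then show ?thesis using False Cons by simp
  qed
qed

lemma zeck_dropWhile: "zeck_val (dropWhile Not w) = zeck_val w"
  using zeck_val_replicate dropWhile_split by metis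

lemma fib_ge: "k + 1 \<le> fib (k + 2)"
proof (induction k)
  case 0 then show ?case by simp
next
  case (Suc k)
  have "fib (Suc k + 2) = fib (k + 2) + fib (k + 1)" by (simp add: numeral_2_eq_2)
  moreover have "0 < fib (k + 1)" by (simp add: fib_neq_0_nat)
  ultimately show ?case using Suc by simp
qed

lemma canon_exists: "\<exists>w. canon w \<and> zeck_val w = n"
proof -
  have "n < fib (n + 2)" using fib_ge[of n] by simp
  then obtain w where "no_adj_ones w" "zeck_val w = n" using zeck_exists_len by blast
  then show ?thesis using dropWhile_canon zeck_dropWhile by metis
qed

lemma fib_rep: "canon (fib_rep n) \<and> zeck_val (fib_rep n) = n"
proof -
  obtain w where w: "canon w" "zeck_val w = n" using canon_exists by blast
  have "no_adj_ones (fib_rep n) \<and> (fib_rep n = [] \<or> hd (fib_rep n)) \<and> zeck_val (fib_rep n) = n"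
    unfolding fib_rep_def
    by (rule theI[of _ w]) (use w canon_unique in \<open>auto simp: canon_def\<close>)
  then show ?thesis by (simp add: canon_def)
qed

lemma fib_rep_canon: "canon (fib_rep n)" and zeck_fib_rep[simp]: "zeck_val (fib_rep n) = n"
  using fib_rep by auto

lemma fib_rep_zeck: "canon w \<Longrightarrow> fib_rep (zeck_val w) = w"
  using canon_unique fib_rep by blast

lemma fib_rep_no_adj: "no_adj_ones (fib_rep n)"
  using fib_rep_canon canon_def by auto

lemma len_fib_rep: "length (fib_rep n) \<le> L \<longleftrightarrow> n < fib (L + 2)"
proof
  assume "length (fib_rep n) \<le> L"
  then have "fib (length (fib_rep n) + 2) \<le> fib (L + 2)" by (intro fib_mono) simp
  then show "n < fib (L + 2)" using zeck_val_bound[OF fib_rep_no_adj, of n] by simp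
next
  assume a: "n < fib (L + 2)"
  show "length (fib_rep n) \<le> L"
  proof (rule ccontr)
    assume "\<not> length (fib_rep n) \<le> L"
    then have ne: "fib_rep n \<noteq> []" and le: "L + 2 \<le> length (fib_rep n) + 1" by auto
    have "fib (L+2) \<le> fib (length (fib_rep n) + 1)" using le by (rule fib_mono)
    moreover have "fib (length (fib_rep n) + 1) \<le> n"
      using zeck_val_lower[of "fib_rep n"] fib_rep_canon[of n] ne by (auto simp: canon_def)
    ultimately show False using a by simp
  qed
qed

definition track :: "nat \<Rightarrow> nat \<Rightarrow> bool list" where
  "track n L = replicate (L - length (fib_rep n)) False @ fib_rep n"

lemma track_props: "length (fib_rep n) \<le> L \<Longrightarrow> no_adj_ones (track n L) \<and> length (track n L) = L \<and> zeck_val (track n L) = n"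
  by (simp add: track_def fib_rep_no_adj)

lemma no_adj_track: "no_adj_ones w \<Longrightarrow> w = track (zeck_val w) (length w)"
proof -
  assume w: "no_adj_ones w"
  have "fib_rep (zeck_val w) = dropWhile Not w"
    using fib_rep_zeck[OF dropWhile_canon[OF w]] zeck_dropWhile by metis
  then show ?thesis unfolding track_def using dropWhile_split by metis
qed

definition zlen :: "nat \<Rightarrow> nat" where "zlen x = (\<Sum>L<x. if fib (L + 2) \<le> x then 1 else 0)"

lemma len_le_self: "length (fib_rep x) \<le> x"
  using len_fib_rep[of x x] fib_ge[of x] by simp

lemma zlen_eq: "zlen x = length (fib_rep x)"
proof -
  have "zlen x = (\<Sum>L<x. if L < length (fib_rep x) then 1 else 0)"
    unfolding zlen_def
    by (rule sum.cong) (use len_fib_rep[of x] in \<open>auto simp: not_le[symmetric]\<close>)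
  also have "\<dots> = card ({..<x} \<inter> {L. L < length (fib_rep x)})" by (simp add: sum.If_cases)
  also have "{..<x} \<inter> {L. L < length (fib_rep x)} = {..<length (fib_rep x)}"
    using len_le_self[of x] by auto
  finally show ?thesis by simp
qed

definition "r_zlen = Comp (rsum 1 (Comp r_le [Comp r_fib [Comp Succ [Comp Succ [Proj 0]]], Proj 1])) [Proj 0, Proj 0]"
lemma r_zlen_ar[simp]: "ar r_zlen (Suc 0)" by (simp add: r_zlen_def)
lemma r_zlen_ev[simp]: "ev r_zlen [x] = zlen x" by (simp add: r_zlen_def zlen_def)

primrec rr :: "nat \<Rightarrow> nat \<Rightarrow> nat \<Rightarrow> nat" where
  "rr x m 0 = x"
| "rr x m (Suc j) = rr x m j - (if fib (Suc (m - j)) \<le> rr x m j then fib (Suc (m - j)) else 0)"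

definition "r_rr = PrimRec (Proj 0) (Comp r_sub [Proj 1,
   Comp r_cond [Comp r_le [Comp r_fib [Comp Succ [Comp r_sub [Proj 3, Proj 0]]], Proj 1],
                Comp r_fib [Comp Succ [Comp r_sub [Proj 3, Proj 0]]], Zero]])"
lemma r_rr_ar[simp]: "ar r_rr (Suc (Suc (Suc 0)))" by (simp add: r_rr_def)
lemma r_rr_ev[simp]: "ev r_rr [j, x, m] = rr x m j"
  by (induction j) (simp_all add: r_rr_def)

definition dig :: "nat \<Rightarrow> nat \<Rightarrow> nat \<Rightarrow> nat" where
  "dig x m j = (if fib (Suc (m - j)) \<le> rr x m j then 1 else 0)"

definition "r_dig = Comp r_le [Comp r_fib [Comp Succ [Comp r_sub [Proj 1, Proj 2]]], Comp r_rr [Proj 2, Proj 0, Proj 1]]"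
lemma r_dig_ar[simp]: "ar r_dig (Suc (Suc (Suc 0)))" by (simp add: r_dig_def)
lemma r_dig_ev[simp]: "ev r_dig [x, m, j] = dig x m j" by (simp add: r_dig_def dig_def)

lemma no_adj_drop: "no_adj_ones w \<Longrightarrow> no_adj_ones (drop j w)"
  using no_adj_append[of "take j w" "drop j w"] by simp

lemma rr_correct:
  assumes w: "no_adj_ones w" "length w = m" "zeck_val w = x"
  shows "j \<le> m \<Longrightarrow> rr x m j = zeck_val (drop j w)"
    and "j < m \<Longrightarrow> (w ! j) = (fib (Suc (m - j)) \<le> rr x m j)"
proof -
  have key: "j < m \<Longrightarrow> zeck_val (drop j w) = (if w ! j then fib (Suc (m - j)) else 0) + zeck_val (drop (Suc j) w)
       \<and> zeck_val (drop (Suc j) w) < fib (Suc (m - j))" for j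
  proof -
    assume j: "j < m"
    have d: "drop j w = w ! j # drop (Suc j) w" using j w by (simp add: Cons_nth_drop_Suc)
    have l: "length (drop (Suc j) w) + 2 = Suc (m - j)" using j w by simp
    have "zeck_val (drop (Suc j) w) < fib (length (drop (Suc j) w) + 2)"
      by (rule zeck_val_bound[OF no_adj_drop[OF w(1)]])
    then show ?thesis using l by (subst d) (simp only: zeck_val_Cons l)
  qed
  have A: "j \<le> m \<Longrightarrow> rr x m j = zeck_val (drop j w)" for j
  proof (induction j)
    case 0 then show ?case using w by simp
  next
    case (Suc j)
    then have j: "j < m" by simp
    show ?case using Suc key[OF j] j by (auto split: if_splits)
  qed
  show "j \<le> m \<Longrightarrow> rr x m j = zeck_val (drop j w)" by (rule A)
  show "j < m \<Longrightarrow> (w ! j) = (fib (Suc (m - j)) \<le> rr x m j)"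
  proof -
    assume j: "j < m"
    show ?thesis using key[OF j] A[of j] j by auto
  qed
qed

lemma track_dig:
  assumes "length (fib_rep x) \<le> m" "j < m"
  shows "track x m ! j = (dig x m j = 1)"
  using rr_correct(2)[of "track x m" m x j] track_props[OF assms(1)] assms(2)
  by (simp add: dig_def)

lemma pad_pair_track: "pad_pair (fib_rep n) (fib_rep v) =
   zip (track n (max (length (fib_rep n)) (length (fib_rep v)))) (track v (max (length (fib_rep n)) (length (fib_rep v))))"
  by (simp add: pad_pair_def track_def Let_def)

definition codelist :: "dfa \<Rightarrow> nat list" where
  "codelist A = [nstates A, init A] @ trans A @ map (\<lambda>b. if b then 1 else 0) (final A)"

lemma dfa_code_eq: "dfa_code A = list_encode (codelist A)"
  by (simp add: dfa_code_def codelist_def)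

lemma lnth_code:
  assumes wf: "dfa_wf A"
  shows "lnth (dfa_code A) 0 = nstates A"
    and "lnth (dfa_code A) 1 = init A"
    and "i < 4 * nstates A \<Longrightarrow> lnth (dfa_code A) (2 + i) = trans A ! i"
    and "q < nstates A \<Longrightarrow> lnth (dfa_code A) (2 + 4 * nstates A + q) = (if final A ! q then 1 else 0)"
proof -
  have len: "length (codelist A) = 2 + 4 * nstates A + nstates A"
    using wf by (simp add: codelist_def dfa_wf_def)
  show "lnth (dfa_code A) 0 = nstates A"
    by (simp only: dfa_code_eq lnth_enc[of 0, OF len[THEN ssubst, of "\<lambda>x. 0 < x"], simplified]) (simp add: codelist_def)
  show "lnth (dfa_code A) 1 = init A"
    using lnth_enc[of 1 "codelist A"] len by (simp add: dfa_code_eq codelist_def)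
  show "i < 4 * nstates A \<Longrightarrow> lnth (dfa_code A) (2 + i) = trans A ! i"
    using lnth_enc[of "2 + i" "codelist A"] len wf
    by (simp add: dfa_code_eq codelist_def nth_append dfa_wf_def)
  show "q < nstates A \<Longrightarrow> lnth (dfa_code A) (2 + 4 * nstates A + q) = (if final A ! q then 1 else 0)"
    using lnth_enc[of "2 + 4 * nstates A + q" "codelist A"] len wf
    by (simp add: dfa_code_eq codelist_def nth_append dfa_wf_def)
qed

primrec runf :: "nat \<Rightarrow> nat \<Rightarrow> nat \<Rightarrow> nat \<Rightarrow> nat \<Rightarrow> nat" where
  "runf c n v m 0 = lnth c 1"
| "runf c n v m (Suc j) = lnth c (2 + 4 * runf c n v m j + 2 * dig n m j + dig v m j)"

definition "r_run = PrimRec (Comp r_lnth [Proj 0, rc 1])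
  (Comp r_lnth [Proj 2, Comp r_add [Comp r_add [rc 2, Comp r_mult [rc 4, Proj 1]],
     Comp r_add [Comp r_mult [rc 2, Comp r_dig [Proj 3, Proj 5, Proj 0]], Comp r_dig [Proj 4, Proj 5, Proj 0]]]])"
lemma r_run_ar[simp]: "ar r_run (Suc (Suc (Suc (Suc (Suc 0)))))" by (simp add: r_run_def)
lemma r_run_ev[simp]: "ev r_run [j, c, n, v, m] = runf c n v m j"
  by (induction j) (simp_all add: r_run_def add.assoc)

definition accf :: "nat \<Rightarrow> nat \<Rightarrow> nat \<Rightarrow> nat" where
  "accf c n v = (let m = max (zlen n) (zlen v) in
     if lnth c (2 + 4 * lnth c 0 + runf c n v m m) = 0 then 0 else 1)"

definition "r_acc = (let M = Comp r_max [Comp r_zlen [Proj 1], Comp r_zlen [Proj 2]] in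
   Comp r_isz [Comp r_isz [Comp r_lnth [Proj 0, Comp r_add [Comp r_add [rc 2, Comp r_mult [rc 4, Comp r_lnth [Proj 0, rc 0]]],
      Comp r_run [M, Proj 0, Proj 1, Proj 2, M]]]]])"
lemma r_acc_ar[simp]: "ar r_acc (Suc (Suc (Suc 0)))" by (simp add: r_acc_def Let_def)
lemma r_acc_ev[simp]: "ev r_acc [c, n, v] = accf c n v" by (simp add: r_acc_def accf_def Let_def)

lemma dig01: "dig x m j = 0 \<or> dig x m j = 1" by (simp add: dig_def)

lemma foldl_take_Suc: "j < length xs \<Longrightarrow> foldl f s (take (Suc j) xs) = f (foldl f s (take j xs)) (xs ! j)"
  by (simp add: take_Suc_conv_app_nth)

lemma dfa_step_lt: "dfa_wf A \<Longrightarrow> q < nstates A \<Longrightarrow> dfa_step A q c < nstates A"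
proof -
  assume wf: "dfa_wf A" and q: "q < nstates A"
  have "4 * q + 2 * (if fst c then 1 else 0) + (if snd c then 1 else 0) < length (trans A)"
    using wf q by (simp add: dfa_wf_def)
  then show ?thesis using wf by (auto simp: dfa_step_def dfa_wf_def)
qed

lemma foldl_lt: "dfa_wf A \<Longrightarrow> q < nstates A \<Longrightarrow> foldl (dfa_step A) q w < nstates A"
  by (induction w arbitrary: q) (auto intro: dfa_step_lt)

lemma accf_correct:
  assumes wf: "dfa_wf A"
  shows "accf (dfa_code A) n v = (if dfa_accepts A (pad_pair (fib_rep n) (fib_rep v)) then 1 else 0)"
proof -
  define m where "m = max (length (fib_rep n)) (length (fib_rep v))"
  define word where "word = zip (track n m) (track v m)"
  have tn: "length (track n m) = m" and tv: "length (track v m) = m"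
    using track_props[of n m] track_props[of v m] by (auto simp: m_def)
  have lw: "length word = m" using tn tv by (simp add: word_def)
  have wj: "j < m \<Longrightarrow> word ! j = (dig n m j = 1, dig v m j = 1)" for j
    using track_dig[of n m j] track_dig[of v m j] tn tv by (auto simp: word_def m_def)
  have run: "j \<le> m \<Longrightarrow> runf (dfa_code A) n v m j = foldl (dfa_step A) (init A) (take j word)" for j
  proof (induction j)
    case 0 then show ?case using lnth_code(2)[OF wf] by simp
  next
    case (Suc j)
    then have j: "j < m" by simp
    let ?q = "foldl (dfa_step A) (init A) (take j word)"
    have q: "?q < nstates A" using foldl_lt[OF wf] wf by (simp add: dfa_wf_def)
    have idx: "4 * ?q + 2 * dig n m j + dig v m j < 4 * nstates A"
      using q dig01[of n m j] dig01[of v m j] by auto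
    have "runf (dfa_code A) n v m (Suc j) = trans A ! (4 * ?q + 2 * dig n m j + dig v m j)"
      using Suc j lnth_code(3)[OF wf idx] by (simp add: add.assoc)
    also have "\<dots> = dfa_step A ?q (word ! j)"
      using wj[OF j] dig01[of n m j] dig01[of v m j] by (auto simp: dfa_step_def)
    also have "\<dots> = foldl (dfa_step A) (init A) (take (Suc j) word)"
      using foldl_take_Suc[of j word "dfa_step A" "init A"] lw j by simp
    finally show ?case .
  qed
  have pw: "pad_pair (fib_rep n) (fib_rep v) = word" by (simp add: pad_pair_track word_def m_def)
  have zl: "max (zlen n) (zlen v) = m" by (simp add: zlen_eq m_def)
  let ?q = "foldl (dfa_step A) (init A) word"
  have q: "?q < nstates A" using foldl_lt[OF wf] wf by (simp add: dfa_wf_def)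
  have "runf (dfa_code A) n v m m = ?q" using run[of m] lw by simp
  then show ?thesis
    using lnth_code(4)[OF wf q] lnth_code(1)[OF wf] pw zl
    by (simp add: accf_def dfa_accepts_def Let_def)
qed

definition Ef :: "nat \<Rightarrow> nat" where "Ef c = 2 * lnth c 0 + 4"
definition cntw :: "nat \<Rightarrow> nat \<Rightarrow> nat \<Rightarrow> nat" where
  "cntw c L v = (\<Sum>n<fib (L + Ef c + 2). accf c n v)"
definition infc :: "nat \<Rightarrow> nat \<Rightarrow> nat \<Rightarrow> nat" where
  "infc c L v = (\<Sum>n<fib (L + 2 * Ef c + 2). (if fib (L + Ef c + 2) \<le> n then 1 else 0) * accf c n v)"

definition "r_E = Comp r_add [Comp r_mult [rc 2, Comp r_lnth [Proj 0, rc 0]], rc 4]"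
lemma r_E_ar[simp]: "ar r_E (Suc n)" by (simp add: r_E_def)
lemma r_E_ev[simp]: "ev r_E (c # xs) = Ef c" by (simp add: r_E_def Ef_def)

definition "r_cntw = Comp (rsum (Suc (Suc (Suc 0))) (Comp r_acc [Proj 1, Proj 0, Proj 3]))
   [Comp r_fib [Comp r_add [Comp r_add [Proj 1, r_E], rc 2]], Proj 0, Proj 1, Proj 2]"
lemma r_cntw_ar[simp]: "ar r_cntw (Suc (Suc (Suc 0)))" by (simp add: r_cntw_def)
lemma r_cntw_ev[simp]: "ev r_cntw [c, L, v] = cntw c L v" by (simp add: r_cntw_def cntw_def)

definition "r_infc = Comp (rsum (Suc (Suc (Suc 0))) (Comp r_mult [Comp r_le [Comp r_fib [Comp r_add [Comp r_add [Proj 2, Comp r_E [Proj 1]], rc 2]], Proj 0],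
     Comp r_acc [Proj 1, Proj 0, Proj 3]]))
   [Comp r_fib [Comp r_add [Comp r_add [Proj 1, Comp r_mult [rc 2, r_E]], rc 2]], Proj 0, Proj 1, Proj 2]"
lemma r_infc_ar[simp]: "ar r_infc (Suc (Suc (Suc 0)))" by (simp add: r_infc_def)
lemma r_infc_ev[simp]: "ev r_infc [c, L, v] = infc c L v" by (simp add: r_infc_def infc_def)

definition eqwa :: "nat \<Rightarrow> nat \<Rightarrow> nat \<Rightarrow> nat" where
  "eqwa cA cB v = (let L = zlen v; x = (if infc cA L v = 0 then 1 else 0); y = (if infc cB L v = 0 then 1 else 0) in
     (1 - x) * (1 - y) + x * y * (if cntw cA L v = cntw cB L v then 1 else 0))"

definition eqw :: "nat \<Rightarrow> nat \<Rightarrow> nat \<Rightarrow> bool" where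
  "eqw cA cB v = (let L = zlen v in (infc cA L v \<noteq> 0 \<and> infc cB L v \<noteq> 0) \<or>
     (infc cA L v = 0 \<and> infc cB L v = 0 \<and> cntw cA L v = cntw cB L v))"

lemma eqwa_eq: "eqwa cA cB v = (if eqw cA cB v then 1 else 0)"
  by (simp add: eqwa_def eqw_def Let_def)

definition "r_eqw = (let L = Comp r_zlen [Proj 2];
    X = Comp r_isz [Comp r_infc [Proj 0, L, Proj 2]]; Y = Comp r_isz [Comp r_infc [Proj 1, L, Proj 2]] in
   Comp r_add [Comp r_mult [Comp r_sub [rc 1, X], Comp r_sub [rc 1, Y]],
     Comp r_mult [Comp r_mult [X, Y], Comp r_eq [Comp r_cntw [Proj 0, L, Proj 2], Comp r_cntw [Proj 1, L, Proj 2]]]])"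
lemma r_eqw_ar[simp]: "ar r_eqw (Suc (Suc (Suc 0)))" by (simp add: r_eqw_def Let_def)
lemma r_eqw_ev[simp]: "ev r_eqw [cA, cB, v] = eqwa cA cB v" by (simp add: r_eqw_def eqwa_def Let_def)

definition Kf :: "nat \<Rightarrow> nat \<Rightarrow> nat" where
  "Kf cA cB = (let D = 4 * (lnth cA 0 + lnth cB 0) in 4 * 2 ^ D * D)"

definition decide :: "nat \<Rightarrow> nat \<Rightarrow> nat" where
  "decide cA cB = (if (\<Sum>v<fib (Kf cA cB + 2). 1 - eqwa cA cB v) = 0 then 1 else 0)"

definition "r_decide = (let D = Comp r_mult [rc 4, Comp r_add [Comp r_lnth [Proj 0, rc 0], Comp r_lnth [Proj 1, rc 0]]];
   K = Comp r_mult [Comp r_mult [rc 4, Comp r_pow2 [D]], D] in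
   Comp r_isz [Comp (rsum (Suc (Suc 0)) (Comp r_sub [rc 1, Comp r_eqw [Proj 1, Proj 2, Proj 0]]))
     [Comp r_fib [Comp r_add [K, rc 2]], Proj 0, Proj 1]])"
lemma r_decide_ar[simp]: "ar r_decide (Suc (Suc 0))" by (simp add: r_decide_def Let_def)
lemma r_decide_ev[simp]: "ev r_decide [cA, cB] = decide cA cB"
  by (simp add: r_decide_def decide_def Kf_def Let_def)

lemma decide_eq: "decide cA cB = (if (\<forall>v<fib (Kf cA cB + 2). eqw cA cB v) then 1 else 0)"
  by (simp add: decide_def eqwa_eq)

lemma r_decide_correct: "rf_eval r_decide [cA, cB] (if (\<forall>v<fib (Kf cA cB + 2). eqw cA cB v) then 1 else 0)"
  using ev_correct[of r_decide "[cA, cB]"] by (simp add: decide_eq)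

lemma concat_rep_rep: "concat (replicate m (replicate n x)) = replicate (m * n) x"
  by (induction m) (auto simp: replicate_add)

lemma len_concat_rep: "length (concat (replicate m y)) = m * length y"
  by (induction m) auto

lemma foldl_concat_rep: "foldl f q u = q \<Longrightarrow> foldl f q (concat (replicate m u)) = q"
  by (induction m) auto

lemma no_adj_take: "no_adj_ones w \<Longrightarrow> no_adj_ones (take j w)"
  using no_adj_append[of "take j w" "drop j w"] by simp

lemma no_adj_concat_rep: "no_adj_ones y \<Longrightarrow> y \<noteq> [] \<Longrightarrow> \<not> last y \<Longrightarrow>
   no_adj_ones (concat (replicate m y)) \<and> (m > 0 \<longrightarrow> concat (replicate m y) \<noteq> [] \<and> \<not> last (concat (replicate m y)))"
proof (induction m)
  case 0 then show ?case by simp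
next
  case (Suc m) then show ?case by (cases m) (auto simp: no_adj_append)
qed

lemma pad_pair_long: "length s \<le> length f \<Longrightarrow> pad_pair f s = zip f (replicate (length f - length s) False @ s)"
  by (simp add: pad_pair_def Let_def max_def)

lemma pump:
  assumes wf: "dfa_wf A" and cf: "canon f" and len: "length f = length s + k"
    and k: "2 * nstates A + 3 \<le> k"
  defines "W \<equiv> pad_pair f s"
  shows "\<exists>a b. 1 \<le> a \<and> a < b \<and> b \<le> 2 * nstates A + 2 \<and>
     (\<forall>m. let Wm = take a W @ concat (replicate m (drop a (take b W))) @ drop b W in
        canon (map fst Wm) \<and> Wm = pad_pair (map fst Wm) s \<and>
        (dfa_accepts A Wm \<longleftrightarrow> dfa_accepts A W) \<and> length Wm + (b - a) = length f + m * (b - a))"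
proof -
  let ?N = "nstates A"
  define g where "g = replicate k False @ s"
  have W: "W = zip f g" using len by (simp add: W_def g_def pad_pair_long)
  have lg: "length g = length f" using len by (simp add: g_def)
  have lW: "length W = length f" using W lg by simp
  have naf: "no_adj_ones f" and hdf: "f \<noteq> [] \<and> hd f" using cf len k by (auto simp: canon_def)
  define P where "P i = foldl (dfa_step A) (init A) (take i W)" for i
  define cut where "cut j = (if f ! (2*j) then 2*j+2 else 2*j+1)" for j
  have cut_le: "j \<le> ?N \<Longrightarrow> 1 \<le> cut j \<and> cut j \<le> 2*j+2" for j by (simp add: cut_def)
  have cut_le2: "j \<le> ?N \<Longrightarrow> cut j \<le> 2*?N+2" for j by (simp add: cut_def)
  have cut_mono: "i < j \<Longrightarrow> cut i < cut j" for i j by (simp add: cut_def)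
  have cut_zero: "j \<le> ?N \<Longrightarrow> \<not> f ! (cut j - 1)" for j
  proof -
    assume j: "j \<le> ?N"
    have i1: "Suc (2*j) < length f" using j k len by simp
    show ?thesis
    proof (cases "f ! (2*j)")
      case True
      then show ?thesis using naf i1 unfolding no_adj_ones_def cut_def by auto
    next
      case False then show ?thesis by (simp add: cut_def)
    qed
  qed
  have P_lt: "P i < ?N" for i using foldl_lt[OF wf] wf by (simp add: P_def dfa_wf_def)
  have "\<not> inj_on (\<lambda>j. P (cut j)) {..?N}"
  proof
    assume "inj_on (\<lambda>j. P (cut j)) {..?N}"
    then have "card {..?N} \<le> card {..<?N}" by (rule card_inj_on_le) (auto simp: P_lt)
    then show False by simp
  qed
  then obtain i j where ij: "i \<le> ?N" "j \<le> ?N" "i \<noteq> j" "P (cut i) = P (cut j)"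
    unfolding inj_on_def by auto
  obtain a b where ab: "a = cut (min i j)" "b = cut (max i j)" by simp
  have a1: "1 \<le> a" and ab_lt: "a < b" and b2: "b \<le> 2*?N+2" and Pab: "P a = P b"
    and za: "\<not> f ! (a - 1)" and zb: "\<not> f ! (b - 1)"
    using ab ij cut_le cut_le2 cut_mono cut_zero by (auto simp: min_def max_def)
  have bk: "b < k" using b2 k by simp
  have bf: "b < length f" using bk len k by simp
  define wx where "wx = take a W"
  define wy where "wy = drop a (take b W)"
  define wz where "wz = drop b W"
  have mf: "map fst W = f" and mg: "map snd W = g" using W lg by simp_all
  have tt: "take b W = wx @ wy" unfolding wx_def wy_def
    using append_take_drop_id[of a "take b W"] ab_lt by (simp add: min_def)
  have Wsplit: "W = wx @ wy @ wz" using tt append_take_drop_id[of b W] by (simp add: wz_def)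
  have lwy: "length wy = b - a" using lW bf by (simp add: wy_def)
  have lwx: "length wx = a" using lW bf ab_lt by (simp add: wx_def)
  have fx: "map fst wx = take a f" using mf by (simp add: wx_def take_map[symmetric])
  have fy: "map fst wy = drop a (take b f)" using mf by (simp add: wy_def take_map[symmetric] drop_map[symmetric])
  have fz: "map fst wz = drop b f" using mf by (simp add: wz_def drop_map[symmetric])
  have gtake: "take b g = replicate b False" using bk by (simp add: g_def)
  have tag: "take a g = take a (take b g)" using ab_lt by (simp add: min_def)
  have sx: "map snd wx = replicate a False" using mg gtake tag ab_lt
    by (simp add: wx_def take_map[symmetric])
  have sy: "map snd wy = replicate (b - a) False" using mg gtake
    by (simp add: wy_def take_map[symmetric] drop_map[symmetric])
  have sz: "map snd wz = replicate (k - b) False @ s" using mg bk by (simp add: wz_def drop_map[symmetric] g_def)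
  have Px: "foldl (dfa_step A) (init A) wx = P a" by (simp add: P_def wx_def)
  have Py: "foldl (dfa_step A) (P a) wy = P a"
  proof -
    from tt show ?thesis using Pab by (simp add: P_def Px[symmetric] wx_def)
  qed
  have x_na: "no_adj_ones (take a f)" using naf by (rule no_adj_take)
  have y_na: "no_adj_ones (drop a (take b f))" using no_adj_drop[OF no_adj_take[OF naf]] .
  have z_na: "no_adj_ones (drop b f)" using naf by (rule no_adj_drop)
  have x_ne: "take a f \<noteq> []" "\<not> last (take a f)" "hd (take a f)"
    using a1 bf ab_lt za hdf by (auto simp: last_conv_nth hd_take)
  have y_ne: "drop a (take b f) \<noteq> []" "\<not> last (drop a (take b f))"
    using ab_lt bf zb by (auto simp: last_conv_nth)
  show ?thesis
  proof (intro exI conjI allI)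
    show "1 \<le> a" "a < b" "b \<le> 2*?N+2" by fact+
    fix m
    let ?Wm = "take a W @ concat (replicate m (drop a (take b W))) @ drop b W"
    have Wm: "?Wm = wx @ concat (replicate m wy) @ wz" by (simp add: wx_def wy_def wz_def)
    have fWm: "map fst ?Wm = take a f @ concat (replicate m (drop a (take b f))) @ drop b f"
      using Wm fx fy fz by (simp add: map_concat)
    have sWm: "map snd ?Wm = replicate a False @ replicate (m * (b - a)) False @ replicate (k - b) False @ s"
      using Wm sx sy sz by (simp add: map_concat concat_rep_rep)
    have canWm: "canon (map fst ?Wm)"
    proof -
      have c: "no_adj_ones (concat (replicate m (drop a (take b f))))"
        "m > 0 \<Longrightarrow> concat (replicate m (drop a (take b f))) \<noteq> [] \<and> \<not> last (concat (replicate m (drop a (take b f))))"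
        using no_adj_concat_rep[OF y_na y_ne] by auto
      have na: "no_adj_ones (concat (replicate m (drop a (take b f))) @ drop b f)"
        using c z_na by (cases "m = 0") (auto simp: no_adj_append)
      have "no_adj_ones (take a f @ concat (replicate m (drop a (take b f))) @ drop b f)"
        using na x_na x_ne by (auto simp: no_adj_append)
      then show ?thesis using x_ne fWm by (simp add: canon_def)
    qed
    have lWm: "length ?Wm = a + m * (b - a) + (length f - b)"
      by (subst Wm) (simp add: len_concat_rep lwx lwy lW wz_def)
    have lsk: "length f - b = (k - b) + length s" using len bk by simp
    have padWm: "?Wm = pad_pair (map fst ?Wm) s"
    proof -
      have "length (map fst ?Wm) - length s = a + m * (b - a) + (k - b)" using lWm lsk by simp
      then have e: "map snd ?Wm = replicate (length (map fst ?Wm) - length s) False @ s"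
        using sWm by (simp add: replicate_add[symmetric])
      have le: "length s \<le> length (map fst ?Wm)" using lWm lsk by simp
      have "pad_pair (map fst ?Wm) s = zip (map fst ?Wm) (map snd ?Wm)"
        by (simp only: pad_pair_long[OF le] e)
      then show ?thesis by (simp only: zip_map_fst_snd)
    qed
    have accWm: "dfa_accepts A ?Wm \<longleftrightarrow> dfa_accepts A W"
    proof -
      have "foldl (dfa_step A) (init A) ?Wm = foldl (dfa_step A) (P a) wz"
        using Wm Px foldl_concat_rep[OF Py] by simp
      also have "\<dots> = foldl (dfa_step A) (init A) W" using Wsplit Px Py by simp
      finally show ?thesis by (simp add: dfa_accepts_def)
    qed
    show "let Wm = ?Wm in canon (map fst Wm) \<and> Wm = pad_pair (map fst Wm) s \<and>
        (dfa_accepts A Wm \<longleftrightarrow> dfa_accepts A W) \<and> length Wm + (b - a) = length f + m * (b - a)"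
      unfolding Let_def
    proof (intro conjI)
      show "length ?Wm + (b - a) = length f + m * (b - a)" using lWm ab_lt bf by simp
    qed (fact canWm padWm accWm)+
  qed
qed

lemma sync_acc: "fib_synchronized_by A a \<Longrightarrow> dfa_accepts A (pad_pair (fib_rep n) (fib_rep x)) \<longleftrightarrow> x = a n"
  by (simp add: fib_synchronized_by_def)

lemma pump_sync:
  assumes sy: "fib_synchronized_by A a" and an: "a n = v"
    and long: "length (fib_rep v) + 2 * nstates A + 3 \<le> length (fib_rep n)"
  shows "\<exists>d. 1 \<le> d \<and> d \<le> 2 * nstates A + 2 \<and>
     (\<forall>m. \<exists>n'. a n' = v \<and> length (fib_rep n') + d = length (fib_rep n) + m * d)"
proof -
  have wf: "dfa_wf A" using sy by (simp add: fib_synchronized_by_def)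
  define k where "k = length (fib_rep n) - length (fib_rep v)"
  have len: "length (fib_rep n) = length (fib_rep v) + k" and k: "2 * nstates A + 3 \<le> k"
    using long by (auto simp: k_def)
  obtain a0 b where ab: "1 \<le> a0" "a0 < b" "b \<le> 2 * nstates A + 2" and
    P: "\<forall>m. let Wm = take a0 (pad_pair (fib_rep n) (fib_rep v)) @ concat (replicate m (drop a0 (take b (pad_pair (fib_rep n) (fib_rep v))))) @ drop b (pad_pair (fib_rep n) (fib_rep v)) in
        canon (map fst Wm) \<and> Wm = pad_pair (map fst Wm) (fib_rep v) \<and>
        (dfa_accepts A Wm \<longleftrightarrow> dfa_accepts A (pad_pair (fib_rep n) (fib_rep v))) \<and> length Wm + (b - a0) = length (fib_rep n) + m * (b - a0)"
    using pump[OF wf fib_rep_canon len k] by blast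
  have acc: "dfa_accepts A (pad_pair (fib_rep n) (fib_rep v))" using sy an by (simp add: sync_acc)
  have main: "\<forall>m. \<exists>n'. a n' = v \<and> length (fib_rep n') + (b - a0) = length (fib_rep n) + m * (b - a0)"
  proof
    fix m
    define Wm where "Wm = take a0 (pad_pair (fib_rep n) (fib_rep v)) @ concat (replicate m (drop a0 (take b (pad_pair (fib_rep n) (fib_rep v))))) @ drop b (pad_pair (fib_rep n) (fib_rep v))"
    have Pm: "canon (map fst Wm) \<and> Wm = pad_pair (map fst Wm) (fib_rep v) \<and>
        (dfa_accepts A Wm \<longleftrightarrow> dfa_accepts A (pad_pair (fib_rep n) (fib_rep v))) \<and> length Wm + (b - a0) = length (fib_rep n) + m * (b - a0)"
      using P[rule_format, of m] unfolding Wm_def Let_def .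
    have c: "canon (map fst Wm)" and e: "Wm = pad_pair (map fst Wm) (fib_rep v)"
      and ac: "dfa_accepts A Wm" and l: "length Wm + (b - a0) = length (fib_rep n) + m * (b - a0)"
      using Pm acc by blast+
    define n' where "n' = zeck_val (map fst Wm)"
    have r: "fib_rep n' = map fst Wm" using fib_rep_zeck[OF c] by (simp add: n'_def)
    have "a n' = v" using sync_acc[OF sy, of n' v] ac e r by simp
    moreover have "length (fib_rep n') + (b - a0) = length (fib_rep n) + m * (b - a0)" using r l by simp
    ultimately show "\<exists>n'. a n' = v \<and> length (fib_rep n') + (b - a0) = length (fib_rep n) + m * (b - a0)" by blast
  qed
  show ?thesis using ab main by (intro exI[of _ "b - a0"]) auto
qed

lemma pump_up:
  assumes sy: "fib_synchronized_by A a" and an: "a n = v"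
    and long: "length (fib_rep v) + 2 * nstates A + 3 \<le> length (fib_rep n)"
  shows "infinite {n. a n = v}"
proof -
  obtain d where d: "1 \<le> d" and P: "\<forall>m. \<exists>n'. a n' = v \<and> length (fib_rep n') + d = length (fib_rep n) + m * d"
    using pump_sync[OF sy an long] by blast
  obtain h where h: "\<And>m. a (h m) = v \<and> length (fib_rep (h m)) + d = length (fib_rep n) + m * d"
    using P by metis
  have "inj h"
  proof (rule injI)
    fix x y assume "h x = h y"
    then have "length (fib_rep (h x)) = length (fib_rep (h y))" by simp
    then have "x * d = y * d" using h[of x] h[of y] by linarith
    then show "x = y" using d by simp
  qed
  moreover have "range h \<subseteq> {n. a n = v}" using h by auto
  ultimately show ?thesis
  proof -
    assume i: "inj h" and r: "range h \<subseteq> {n. a n = v}"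
    show ?thesis
    proof
      assume "finite {n. a n = v}"
      then have "finite (range h)" using r finite_subset by blast
      then have "finite (UNIV :: nat set)" using finite_imageD i by blast
      then show False by simp
    qed
  qed
qed

lemma pump_down:
  assumes sy: "fib_synchronized_by A a"
  shows "a n = v \<Longrightarrow> length (fib_rep v) + (2 * nstates A + 4) < length (fib_rep n) \<Longrightarrow>
    \<exists>n'. a n' = v \<and> length (fib_rep v) + (2 * nstates A + 4) < length (fib_rep n') \<and>
         length (fib_rep n') \<le> length (fib_rep v) + 2 * (2 * nstates A + 4)"
proof (induction "length (fib_rep n)" arbitrary: n rule: less_induct)
  case less
  show ?case
  proof (cases "length (fib_rep n) \<le> length (fib_rep v) + 2 * (2 * nstates A + 4)")
    case True then show ?thesis using less.prems by blast
  next
    case False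
    obtain d where d: "1 \<le> d" "d \<le> 2 * nstates A + 2" and P: "\<forall>m. \<exists>n'. a n' = v \<and> length (fib_rep n') + d = length (fib_rep n) + m * d"
      using pump_sync[OF sy less.prems(1)] less.prems(2) by fastforce
    obtain n0 where n0: "a n0 = v" "length (fib_rep n0) + d = length (fib_rep n)" using P[rule_format, of 0] by auto
    have "length (fib_rep n0) < length (fib_rep n)" using n0 d by simp
    moreover have "length (fib_rep v) + (2 * nstates A + 4) < length (fib_rep n0)" using n0 d False by simp
    ultimately show ?thesis using less.hyps n0 by blast
  qed
qed

lemma sync_wf: "fib_synchronized_by A a \<Longrightarrow> dfa_wf A" by (simp add: fib_synchronized_by_def)

lemma accf_sync: "fib_synchronized_by A a \<Longrightarrow> accf (dfa_code A) n v = (if a n = v then 1 else 0)"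
  using accf_correct[OF sync_wf] sync_acc by metis

lemma Ef_code: "dfa_wf A \<Longrightarrow> Ef (dfa_code A) = 2 * nstates A + 4"
  by (simp add: Ef_def lnth_code)

lemma sum_ind_card: "(\<Sum>n<(U::nat). if P n then 1 else 0) = card {n. n < U \<and> P n}"
proof -
  have "card {n \<in> {..<U}. P n} = (\<Sum>n\<in>{n \<in> {..<U}. P n}. 1)" by simp
  also have "\<dots> = (\<Sum>n<U. if P n then 1 else 0)" by (rule sum.inter_filter) simp
  finally show ?thesis by (simp add: lessThan_def Collect_conj_eq[symmetric])
qed

lemma lo_iff: "fib (X + 2) \<le> n \<longleftrightarrow> X < length (fib_rep n)"
  by (metis len_fib_rep not_le)
lemma hi_iff: "n < fib (X + 2) \<longleftrightarrow> length (fib_rep n) \<le> X"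
  by (metis len_fib_rep)

lemma infc_iff:
  assumes sy: "fib_synchronized_by A a"
  shows "infc (dfa_code A) (length (fib_rep v)) v \<noteq> 0 \<longleftrightarrow> infinite {n. a n = v}"
proof -
  let ?L = "length (fib_rep v)" and ?N = "nstates A"
  define E where "E = 2 * ?N + 4"
  have Eq: "Ef (dfa_code A) = E" using Ef_code[OF sync_wf[OF sy]] by (simp add: E_def)
  have "infc (dfa_code A) ?L v = (\<Sum>n<fib (?L + 2 * E + 2). if fib (?L + E + 2) \<le> n \<and> a n = v then 1 else 0)"
    unfolding infc_def Eq by (rule sum.cong) (simp_all add: accf_sync[OF sy])
  also have "\<dots> = card {n. n < fib (?L + 2 * E + 2) \<and> (fib (?L + E + 2) \<le> n \<and> a n = v)}"
    by (rule sum_ind_card)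
  also have "{n. n < fib (?L + 2 * E + 2) \<and> (fib (?L + E + 2) \<le> n \<and> a n = v)} =
      {n. length (fib_rep n) \<le> ?L + 2 * E \<and> ?L + E < length (fib_rep n) \<and> a n = v}"
    by (simp only: lo_iff hi_iff)
  finally have ic: "infc (dfa_code A) ?L v = card {n. length (fib_rep n) \<le> ?L + 2 * E \<and> ?L + E < length (fib_rep n) \<and> a n = v}" .
  have fin: "finite {n. length (fib_rep n) \<le> ?L + 2 * E \<and> ?L + E < length (fib_rep n) \<and> a n = v}"
  proof (rule finite_subset[of _ "{..<fib (?L + 2 * E + 2)}"])
    show "{n. length (fib_rep n) \<le> ?L + 2 * E \<and> ?L + E < length (fib_rep n) \<and> a n = v} \<subseteq> {..<fib (?L + 2 * E + 2)}"
    proof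
      fix n assume "n \<in> {n. length (fib_rep n) \<le> ?L + 2 * E \<and> ?L + E < length (fib_rep n) \<and> a n = v}"
      then have "length (fib_rep n) \<le> ?L + 2 * E" by simp
      then show "n \<in> {..<fib (?L + 2 * E + 2)}" unfolding lessThan_iff using hi_iff[of n "?L+2*E"] by blast
    qed
  qed simp
  have i: "infc (dfa_code A) ?L v \<noteq> 0 \<longleftrightarrow> (\<exists>n. ?L + E < length (fib_rep n) \<and> length (fib_rep n) \<le> ?L + 2 * E \<and> a n = v)"
    unfolding ic using fin by (auto simp: card_eq_0_iff)
  show ?thesis
  proof
    assume "infc (dfa_code A) ?L v \<noteq> 0"
    then obtain n where n: "?L + E < length (fib_rep n)" "a n = v" using i by blast
    have "?L + 2 * ?N + 3 \<le> length (fib_rep n)" using n by (simp add: E_def)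
    then show "infinite {n. a n = v}" using pump_up[OF sy n(2)] by simp
  next
    assume inf: "infinite {n. a n = v}"
    have "\<exists>n. a n = v \<and> \<not> n < fib (?L + E + 2)"
    proof (rule ccontr)
      assume "\<not> ?thesis"
      then have "{n. a n = v} \<subseteq> {..<fib (?L + E + 2)}" by auto
      then show False using inf finite_subset by blast
    qed
    then obtain n where an: "a n = v" and "?L + E < length (fib_rep n)"
      by (auto simp only: hi_iff not_le)
    then obtain n' where "a n' = v" "?L + E < length (fib_rep n')" "length (fib_rep n') \<le> ?L + 2 * E"
      using pump_down[OF sy an] by (auto simp: E_def)
    then show "infc (dfa_code A) ?L v \<noteq> 0" using i by blast
  qed
qed

lemma cntw_eq:
  assumes sy: "fib_synchronized_by A a" and fin: "finite {n. a n = v}"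
  shows "cntw (dfa_code A) (length (fib_rep v)) v = card {n. a n = v}"
proof -
  let ?L = "length (fib_rep v)" and ?N = "nstates A"
  define E where "E = 2 * ?N + 4"
  have Eq: "Ef (dfa_code A) = E" using Ef_code[OF sync_wf[OF sy]] by (simp add: E_def)
  have sub: "a n = v \<Longrightarrow> n < fib (?L + E + 2)" for n
  proof (rule ccontr)
    assume an: "a n = v" and "\<not> n < fib (?L + E + 2)"
    then have "?L + E < length (fib_rep n)" by (simp only: hi_iff not_le)
    then obtain n' where n': "a n' = v" "?L + E < length (fib_rep n')" using pump_down[OF sy an] by (auto simp: E_def)
    have "?L + 2 * ?N + 3 \<le> length (fib_rep n')" using n' by (simp add: E_def)
    then have "infinite {n. a n = v}" using pump_up[OF sy n'(1)] by simp
    then show False using fin by simp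
  qed
  have "cntw (dfa_code A) ?L v = (\<Sum>n<fib (?L + E + 2). if a n = v then 1 else 0)"
    unfolding cntw_def Eq by (rule sum.cong) (simp_all add: accf_sync[OF sy])
  also have "\<dots> = card {n. n < fib (?L + E + 2) \<and> a n = v}" by (rule sum_ind_card)
  also have "{n. n < fib (?L + E + 2) \<and> a n = v} = {n. a n = v}" using sub by auto
  finally show ?thesis .
qed

definition fibeq :: "(nat \<Rightarrow> nat) \<Rightarrow> (nat \<Rightarrow> nat) \<Rightarrow> nat \<Rightarrow> bool" where
  "fibeq a b v \<longleftrightarrow> (finite {n. a n = v} \<longleftrightarrow> finite {n. b n = v}) \<and> card {n. a n = v} = card {n. b n = v}"

lemma eqw_fibeq:
  assumes sa: "fib_synchronized_by A a" and sb: "fib_synchronized_by B b"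
  shows "eqw (dfa_code A) (dfa_code B) v \<longleftrightarrow> fibeq a b v"
  using infc_iff[OF sa, of v] infc_iff[OF sb, of v] cntw_eq[OF sa, of v] cntw_eq[OF sb, of v]
  by (auto simp: eqw_def fibeq_def Let_def zlen_eq)

lemma perm_fibeq: "is_perm_of a b \<Longrightarrow> fibeq a b v"
proof -
  assume "is_perm_of a b"
  then obtain \<sigma> where bij: "bij \<sigma>" and e: "\<And>n. a n = b (\<sigma> n)" by (auto simp: is_perm_of_def)
  have "bij_betw \<sigma> {n. a n = v} {n. b n = v}"
  proof (rule bij_betw_imageI)
    show "inj_on \<sigma> {n. a n = v}" using bij bij_is_inj inj_on_subset by blast
    show "\<sigma> ` {n. a n = v} = {n. b n = v}"
    proof
      show "\<sigma> ` {n. a n = v} \<subseteq> {n. b n = v}" using e by auto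
      show "{n. b n = v} \<subseteq> \<sigma> ` {n. a n = v}"
      proof
        fix m assume m: "m \<in> {n. b n = v}"
        obtain n where "m = \<sigma> n" using bij by (metis bij_pointE)
        then show "m \<in> \<sigma> ` {n. a n = v}" using m e by auto
      qed
    qed
  qed
  then show ?thesis using bij_betw_finite bij_betw_same_card by (auto simp: fibeq_def)
qed

lemma fibeq_bij: "fibeq a b v \<Longrightarrow> \<exists>h. bij_betw h {n. a n = v} {n. b n = v}"
proof -
  assume f: "fibeq a b v"
  show ?thesis
  proof (cases "finite {n. a n = v}")
    case True
    then show ?thesis using f finite_same_card_bij by (auto simp: fibeq_def)
  next
    case False
    then have inf: "infinite {n. b n = v}" using f by (auto simp: fibeq_def)
    have "bij_betw (enumerate {n. b n = v} \<circ> inv_into UNIV (enumerate {n. a n = v})) {n. a n = v} {n. b n = v}"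
      by (rule bij_betw_trans[OF bij_betw_inv_into[OF bij_enumerate[OF False]] bij_enumerate[OF inf]])
    then show ?thesis by blast
  qed
qed

lemma fibeq_perm: "(\<forall>v. fibeq a b v) \<Longrightarrow> is_perm_of a b"
proof -
  assume all: "\<forall>v. fibeq a b v"
  then have "\<forall>v. \<exists>h. bij_betw h {n. a n = v} {n. b n = v}" using fibeq_bij by blast
  then obtain H where H: "\<And>v. bij_betw (H v) {n. a n = v} {n. b n = v}" by metis
  define \<sigma> where "\<sigma> n = H (a n) n" for n
  have mem: "b (\<sigma> n) = a n" for n
    using bij_betwE[OF H[of "a n"]] by (simp add: \<sigma>_def)
  have "bij \<sigma>"
  proof (rule bijI)
    show "inj \<sigma>"
    proof (rule injI)
      fix x y assume xy: "\<sigma> x = \<sigma> y"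
      then have "a x = a y" using mem by metis
      then have "H (a x) x = H (a x) y" using xy by (simp add: \<sigma>_def)
      moreover have "inj_on (H (a x)) {n. a n = a x}" using H bij_betw_def by blast
      ultimately show "x = y" using \<open>a x = a y\<close> by (auto dest: inj_onD)
    qed
    show "surj \<sigma>"
    proof -
      have "m \<in> range \<sigma>" for m
      proof -
        have "m \<in> H (b m) ` {n. a n = b m}" using bij_betw_imp_surj_on[OF H[of "b m"]] by simp
        then obtain n where "a n = b m" "m = H (b m) n" by auto
        then have "m = \<sigma> n" by (simp add: \<sigma>_def)
        then show ?thesis by blast
      qed
      then show ?thesis by auto
    qed
  qed
  then show ?thesis using mem by (auto simp: is_perm_of_def)
qed

lemma perm_iff_fibeq: "is_perm_of a b \<longleftrightarrow> (\<forall>v. fibeq a b v)"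
  using perm_fibeq fibeq_perm by blast

interpretation fv: vector_space "\<lambda>(r::real) (x::'a \<Rightarrow> real). (\<lambda>i. r * x i)"
  by unfold_locales (simp_all add: fun_eq_iff algebra_simps plus_fun_def)

lemma span_lin_image:
  fixes L :: "('a \<Rightarrow> real) \<Rightarrow> ('b \<Rightarrow> real)"
  assumes add: "\<And>x y. L (x + y) = L x + L y" and sc: "\<And>r x. L (\<lambda>i. r * x i) = (\<lambda>i. r * L x i)"
  shows "x \<in> fv.span S \<Longrightarrow> L x \<in> fv.span (L ` S)"
proof (induction rule: fv.span_induct_alt)
  case base
  have "L 0 = L (\<lambda>i. 0 * (0::'a\<Rightarrow>real) i)" by (simp add: zero_fun_def)
  also have "\<dots> = 0" using sc[of 0 0] by (simp add: zero_fun_def)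
  finally have "L 0 = 0" .
  then show ?case by (simp only:) (rule fv.span_zero)
next
  case (step c x y)
  have "L ((\<lambda>i. c * x i) + y) = (\<lambda>i. c * L x i) + L y" by (simp add: add sc)
  moreover have "L x \<in> fv.span (L ` S)" using step by (intro fv.span_base) simp
  ultimately show ?case using step fv.span_add fv.span_scale by metis
qed

lemma span_functional_zero:
  fixes P :: "('a \<Rightarrow> real) \<Rightarrow> real"
  assumes add: "\<And>x y. P (x + y) = P x + P y" and sc: "\<And>r x. P (\<lambda>i. r * x i) = r * P x"
    and z: "\<And>y. y \<in> S \<Longrightarrow> P y = 0"
  shows "x \<in> fv.span S \<Longrightarrow> P x = 0"
proof (induction rule: fv.span_induct_alt)
  case base
  have "P 0 = P (\<lambda>i. 0 * (0::'a\<Rightarrow>real) i)" by (simp add: zero_fun_def)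
  also have "\<dots> = 0" using sc[of 0 0] by simp
  finally show ?case .
next
  case (step c x y)
  have "P ((\<lambda>i. c * x i) + y) = c * P x + P y" by (simp only: add sc)
  then show ?case using step z by (simp add: plus_fun_def)
qed

lemma bound_lemma:
  fixes L :: "bool \<Rightarrow> ('a \<Rightarrow> real) \<Rightarrow> ('a \<Rightarrow> real)" and X0 :: "'a \<Rightarrow> real"
    and P :: "('a \<Rightarrow> real) \<Rightarrow> real" and B :: "('a \<Rightarrow> real) set"
  assumes Ladd: "\<And>c x y. L c (x + y) = L c x + L c y"
    and Lsc: "\<And>c r x. L c (\<lambda>i. r * x i) = (\<lambda>i. r * L c x i)"
    and Padd: "\<And>x y. P (x + y) = P x + P y" and Psc: "\<And>r x. P (\<lambda>i. r * x i) = r * P x"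
    and fB: "finite B" and inB: "\<And>s. foldl (\<lambda>x c. L c x) X0 s \<in> fv.span B"
    and ex: "P (foldl (\<lambda>x c. L c x) X0 s0) \<noteq> 0"
  shows "\<exists>s. length s \<le> card B \<and> P (foldl (\<lambda>x c. L c x) X0 s) \<noteq> 0"
proof (rule ccontr)
  assume nex: "\<not> ?thesis"
  define Xs where "Xs s = foldl (\<lambda>x c. L c x) X0 s" for s
  have Xs_snoc: "Xs (s @ [c]) = L c (Xs s)" for s c by (simp add: Xs_def)
  define m where "m = card B"
  define G where "G k = Xs ` {s. length s \<le> k}" for k
  have Gmono: "i \<le> j \<Longrightarrow> G i \<subseteq> G j" for i j by (auto simp: G_def)
  have zero: "length s \<le> m \<Longrightarrow> P (Xs s) = 0" for s using nex by (auto simp: Xs_def m_def)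
  have GB: "G k \<subseteq> fv.span B" for k using inB by (auto simp: G_def Xs_def)
  have stab: "\<exists>k\<le>m. G (Suc k) \<subseteq> fv.span (G k)"
  proof (rule ccontr)
    assume "\<not> ?thesis"
    then have "\<forall>k\<le>m. \<exists>y. y \<in> G (Suc k) \<and> y \<notin> fv.span (G k)" by auto
    then obtain x where x: "\<And>k. k \<le> m \<Longrightarrow> x k \<in> G (Suc k) \<and> x k \<notin> fv.span (G k)" by metis
    have ind: "j \<le> Suc m \<Longrightarrow> fv.independent (x ` {..<j}) \<and> card (x ` {..<j}) = j" for j
    proof (induction j)
      case 0 then show ?case by (simp add: fv.independent_empty)
    next
      case (Suc j)
      then have jm: "j \<le> m" by simp
      have sub: "x ` {..<j} \<subseteq> fv.span (G j)"
      proof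
        fix y assume "y \<in> x ` {..<j}"
        then obtain i where i: "i < j" "y = x i" by auto
        then have "y \<in> G (Suc i)" using x[of i] jm by simp
        then show "y \<in> fv.span (G j)" using Gmono[of "Suc i" j] i fv.span_superset[of "G j"] by auto
      qed
      have nin: "x j \<notin> fv.span (x ` {..<j})"
      proof
        assume "x j \<in> fv.span (x ` {..<j})"
        moreover have "fv.span (x ` {..<j}) \<subseteq> fv.span (G j)" using fv.span_mono[OF sub] by (simp only: fv.span_span)
        ultimately have "x j \<in> fv.span (G j)" by (rule subsetD[rotated])
        then show False using x[OF jm] by simp
      qed
      have nin2: "x j \<notin> x ` {..<j}" using nin fv.span_superset[of "x ` {..<j}"] by auto
      have e: "x ` {..<Suc j} = insert (x j) (x ` {..<j})" by (auto simp: lessThan_Suc)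
      show ?case using Suc jm nin nin2 by (simp add: e fv.independent_insertI card_insert_if)
    qed
    have "x ` {..<Suc m} \<subseteq> fv.span B"
    proof
      fix y assume "y \<in> x ` {..<Suc m}"
      then obtain i where "i \<le> m" "y = x i" by (auto simp: less_Suc_eq_le)
      then show "y \<in> fv.span B" using x GB by blast
    qed
    then have "card (x ` {..<Suc m}) \<le> card B" using fv.independent_span_bound[OF fB] ind[of "Suc m"] by blast
    then show False using ind[of "Suc m"] by (simp add: m_def)
  qed
  then obtain k where km: "k \<le> m" and Gk: "G (Suc k) \<subseteq> fv.span (G k)" by blast
  have all: "Xs s \<in> fv.span (G k)" for s
  proof (induction s rule: rev_induct)
    case Nil then show ?case by (intro fv.span_base) (auto simp: G_def)
  next
    case (snoc c s)
    have "L c (Xs s) \<in> fv.span (L c ` G k)" by (rule span_lin_image[OF Ladd Lsc snoc])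
    moreover have LG: "L c ` G k \<subseteq> G (Suc k)"
    proof
      fix y assume "y \<in> L c ` G k"
      then obtain t where "length t \<le> k" "y = L c (Xs t)" by (auto simp: G_def)
      then have "y = Xs (t @ [c])" "length (t @ [c]) \<le> Suc k" by (simp_all add: Xs_snoc)
      then show "y \<in> G (Suc k)" by (auto simp: G_def)
    qed
    ultimately have "L c (Xs s) \<in> fv.span (G (Suc k))" using fv.span_mono[OF LG] by blast
    moreover have "fv.span (G (Suc k)) \<subseteq> fv.span (G k)" using fv.span_mono[OF Gk] by (simp only: fv.span_span)
    ultimately have "L c (Xs s) \<in> fv.span (G k)" by (rule subsetD[rotated])
    then show ?case by (simp add: Xs_snoc)
  qed
  have "P (Xs s0) = 0"
    by (rule span_functional_zero[OF Padd Psc _ all]) (use zero km in \<open>auto simp: G_def\<close>)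
  then show False using ex by (simp add: Xs_def)
qed

definition WS :: "nat \<Rightarrow> nat \<Rightarrow> bool list \<Rightarrow> (bool \<times> bool) list set" where
  "WS lo hi s = {w. \<exists>k f. lo \<le> k \<and> k \<le> hi \<and> length f = k + length s \<and> no_adj_ones f \<and>
      (k = 0 \<or> hd f) \<and> w = zip f (replicate k False @ s)}"

definition NS :: "nat \<Rightarrow> nat \<Rightarrow> bool list \<Rightarrow> nat set" where
  "NS lo hi s = {n. lo \<le> length (fib_rep n) - length s \<and> length (fib_rep n) - length s \<le> hi}"

lemma map_fst_pad: "map fst (pad_pair (fib_rep n) s) = replicate (length s - length (fib_rep n)) False @ fib_rep n"
  by (simp add: pad_pair_def Let_def max_def)

lemma bij_NS_WS:
  assumes cs: "canon s"
  shows "bij_betw (\<lambda>n. pad_pair (fib_rep n) s) (NS lo hi s) (WS lo hi s)"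
proof (rule bij_betw_imageI)
  show "inj_on (\<lambda>n. pad_pair (fib_rep n) s) (NS lo hi s)"
  proof (rule inj_onI)
    fix n n' assume "pad_pair (fib_rep n) s = pad_pair (fib_rep n') s"
    then have "zeck_val (map fst (pad_pair (fib_rep n) s)) = zeck_val (map fst (pad_pair (fib_rep n') s))" by simp
    then show "n = n'" by (simp add: map_fst_pad)
  qed
  show "(\<lambda>n. pad_pair (fib_rep n) s) ` NS lo hi s = WS lo hi s"
  proof
    show "(\<lambda>n. pad_pair (fib_rep n) s) ` NS lo hi s \<subseteq> WS lo hi s"
    proof
      fix w assume "w \<in> (\<lambda>n. pad_pair (fib_rep n) s) ` NS lo hi s"
      then obtain n where n: "n \<in> NS lo hi s" "w = pad_pair (fib_rep n) s" by auto
      show "w \<in> WS lo hi s"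
      proof (cases "length (fib_rep n) \<le> length s")
        case True
        then have "w = zip (replicate (length s - length (fib_rep n)) False @ fib_rep n) (replicate 0 False @ s)"
          using n by (simp add: pad_pair_def Let_def max_def)
        moreover have "lo \<le> 0" using n True by (simp add: NS_def)
        ultimately show ?thesis using True fib_rep_no_adj[of n] unfolding WS_def
          by (intro CollectI exI[of _ 0] exI[of _ "replicate (length s - length (fib_rep n)) False @ fib_rep n"]) simp
      next
        case False
        then have ne: "fib_rep n \<noteq> []" by auto
        then have "hd (fib_rep n)" using fib_rep_canon[of n] by (simp add: canon_def)
        moreover have "w = zip (fib_rep n) (replicate (length (fib_rep n) - length s) False @ s)"
          using n False by (simp add: pad_pair_def Let_def max_def)
        ultimately show ?thesis using False n fib_rep_no_adj[of n] unfolding WS_def NS_def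
          by (intro CollectI exI[of _ "length (fib_rep n) - length s"] exI[of _ "fib_rep n"]) auto
      qed
    qed
    show "WS lo hi s \<subseteq> (\<lambda>n. pad_pair (fib_rep n) s) ` NS lo hi s"
    proof
      fix w assume "w \<in> WS lo hi s"
      then obtain k f where kf: "lo \<le> k" "k \<le> hi" "length f = k + length s" "no_adj_ones f"
        "k = 0 \<or> hd f" "w = zip f (replicate k False @ s)" unfolding WS_def by blast
      define n where "n = zeck_val f"
      have tr: "f = track n (length f)" using no_adj_track[OF kf(4)] by (simp add: n_def)
      show "w \<in> (\<lambda>n. pad_pair (fib_rep n) s) ` NS lo hi s"
      proof (cases "k = 0")
        case True
        have lr: "length (fib_rep n) \<le> length s"
          using tr kf(3) True by (metis le_add2 length_append track_def add_0 add.commute)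
        have "pad_pair (fib_rep n) s = zip (track n (length s)) s"
          using lr by (simp add: pad_pair_def Let_def max_def track_def)
        then have "pad_pair (fib_rep n) s = w" using tr kf True by simp
        moreover have "n \<in> NS lo hi s" using lr kf True by (simp add: NS_def)
        ultimately show ?thesis by blast
      next
        case False
        then have hf: "f \<noteq> [] \<and> hd f" using kf by auto
        then have cf: "canon f" using kf by (simp add: canon_def)
        then have rf: "fib_rep n = f" by (simp add: n_def fib_rep_zeck)
        have "pad_pair (fib_rep n) s = w" using rf kf by (simp add: pad_pair_long)
        moreover have "n \<in> NS lo hi s" using rf kf by (simp add: NS_def)
        ultimately show ?thesis by blast
      qed
    qed
  qed
qed

lemma card_NS_WS:
  assumes cs: "canon s"
  shows "card {n \<in> NS lo hi s. P (pad_pair (fib_rep n) s)} = card {w \<in> WS lo hi s. P w}"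
proof -
  have b: "bij_betw (\<lambda>n. pad_pair (fib_rep n) s) (NS lo hi s) (WS lo hi s)" by (rule bij_NS_WS[OF cs])
  have "bij_betw (\<lambda>n. pad_pair (fib_rep n) s) {n \<in> NS lo hi s. P (pad_pair (fib_rep n) s)} {w \<in> WS lo hi s. P w}"
    using b unfolding bij_betw_def inj_on_def by auto
  then show ?thesis by (rule bij_betw_same_card)
qed

definition cnt :: "dfa \<Rightarrow> nat \<Rightarrow> nat \<Rightarrow> bool list \<Rightarrow> nat" where
  "cnt A lo hi s = card {w \<in> WS lo hi s. dfa_accepts A w}"

lemma cntw_cnt:
  assumes sy: "fib_synchronized_by A a"
  shows "cntw (dfa_code A) (length (fib_rep v)) v = cnt A 0 (2 * nstates A + 4) (fib_rep v)"
proof -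
  let ?L = "length (fib_rep v)"
  define E where "E = 2 * nstates A + 4"
  have Eq: "Ef (dfa_code A) = E" using Ef_code[OF sync_wf[OF sy]] by (simp add: E_def)
  have "cntw (dfa_code A) ?L v = (\<Sum>n<fib (?L + E + 2). if a n = v then 1 else 0)"
    unfolding cntw_def Eq by (rule sum.cong) (simp_all add: accf_sync[OF sy])
  also have "\<dots> = card {n. n < fib (?L + E + 2) \<and> a n = v}" by (rule sum_ind_card)
  also have "{n. n < fib (?L + E + 2) \<and> a n = v} = {n \<in> NS 0 E (fib_rep v). dfa_accepts A (pad_pair (fib_rep n) (fib_rep v))}"
    by (auto simp only: NS_def hi_iff sync_acc[OF sy] mem_Collect_eq)
  also have "card \<dots> = cnt A 0 E (fib_rep v)" unfolding cnt_def by (rule card_NS_WS[OF fib_rep_canon])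
  finally show ?thesis by (simp add: E_def)
qed

lemma infc_cnt:
  assumes sy: "fib_synchronized_by A a"
  shows "infc (dfa_code A) (length (fib_rep v)) v = cnt A (Suc (2 * nstates A + 4)) (2 * (2 * nstates A + 4)) (fib_rep v)"
proof -
  let ?L = "length (fib_rep v)"
  define E where "E = 2 * nstates A + 4"
  have Eq: "Ef (dfa_code A) = E" using Ef_code[OF sync_wf[OF sy]] by (simp add: E_def)
  have "infc (dfa_code A) ?L v = (\<Sum>n<fib (?L + 2 * E + 2). if fib (?L + E + 2) \<le> n \<and> a n = v then 1 else 0)"
    unfolding infc_def Eq by (rule sum.cong) (simp_all add: accf_sync[OF sy])
  also have "\<dots> = card {n. n < fib (?L + 2 * E + 2) \<and> (fib (?L + E + 2) \<le> n \<and> a n = v)}"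
    by (rule sum_ind_card)
  also have "{n. n < fib (?L + 2 * E + 2) \<and> (fib (?L + E + 2) \<le> n \<and> a n = v)} =
      {n \<in> NS (Suc E) (2 * E) (fib_rep v). dfa_accepts A (pad_pair (fib_rep n) (fib_rep v))}"
    by (auto simp only: NS_def hi_iff lo_iff sync_acc[OF sy] mem_Collect_eq)
  also have "card \<dots> = cnt A (Suc E) (2 * E) (fib_rep v)" unfolding cnt_def by (rule card_NS_WS[OF fib_rep_canon])
  finally show ?thesis by (simp add: E_def)
qed

lemma card_fibers:
  assumes "finite S" "finite T" "\<And>x. x \<in> S \<Longrightarrow> f x \<in> T"
  shows "card {x \<in> S. P (f x)} = (\<Sum>t\<in>{t \<in> T. P t}. card {x \<in> S. f x = t})"
proof -
  have "{x \<in> S. P (f x)} = (\<Union>t\<in>{t \<in> T. P t}. {x \<in> S. f x = t})" using assms(3) by auto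
  moreover have "card (\<Union>t\<in>{t \<in> T. P t}. {x \<in> S. f x = t}) = (\<Sum>t\<in>{t \<in> T. P t}. card {x \<in> S. f x = t})"
    by (rule card_UN_disjoint) (use assms in auto)
  ultimately show ?thesis by simp
qed

lemma finite_WS: "finite (WS lo hi s)"
proof -
  have "WS lo hi s \<subseteq> {w. set w \<subseteq> UNIV \<and> length w \<le> hi + length s}" by (auto simp: WS_def)
  moreover have "finite {w :: (bool \<times> bool) list. set w \<subseteq> UNIV \<and> length w \<le> hi + length s}"
    by (rule finite_lists_length_le) simp
  ultimately show ?thesis by (rule finite_subset)
qed

definition lastf :: "(bool \<times> bool) list \<Rightarrow> bool" where "lastf w \<longleftrightarrow> w \<noteq> [] \<and> fst (last w)"

definition run :: "dfa \<Rightarrow> (bool \<times> bool) list \<Rightarrow> nat" where "run A w = foldl (dfa_step A) (init A) w"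

lemma last_zip: "length f = length g \<Longrightarrow> f \<noteq> [] \<Longrightarrow> last (zip f g) = (last f, last g)"
proof (induction f arbitrary: g rule: rev_induct)
  case Nil then show ?case by simp
next
  case (snoc x xs)
  then obtain g' y where "g = g' @ [y]" by (cases g rule: rev_cases) auto
  then show ?case using snoc by simp
qed

lemma lastf_zip: "length f = length g \<Longrightarrow> lastf (zip f g) \<longleftrightarrow> f \<noteq> [] \<and> last f"
  by (cases "f = []") (auto simp: lastf_def last_zip)

lemma WS_snoc: "WS lo hi (s @ [c]) = (\<lambda>(w, d). w @ [(d, c)]) ` {(w, d). w \<in> WS lo hi s \<and> \<not> (lastf w \<and> d)}"
proof
  show "WS lo hi (s @ [c]) \<subseteq> (\<lambda>(w, d). w @ [(d, c)]) ` {(w, d). w \<in> WS lo hi s \<and> \<not> (lastf w \<and> d)}"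
  proof
    fix w assume "w \<in> WS lo hi (s @ [c])"
    then obtain k f where kf: "lo \<le> k" "k \<le> hi" "length f = k + length (s @ [c])" "no_adj_ones f"
        "k = 0 \<or> hd f" "w = zip f (replicate k False @ s @ [c])" unfolding WS_def by auto
    then obtain f' d where f: "f = f' @ [d]" by (cases f rule: rev_cases) auto
    have lf': "length f' = k + length s" using kf f by simp
    have w: "w = zip f' (replicate k False @ s) @ [(d, c)]"
      using kf(6) f lf' zip_append[of f' "replicate k False @ s" "[d]" "[c]"] by simp
    have na: "no_adj_ones f'" "\<not> (f' \<noteq> [] \<and> last f' \<and> d)" using kf(4) f by (auto simp: no_adj_append)
    have hd: "k = 0 \<or> hd f'"
    proof (cases "k = 0")
      case False then have "f' \<noteq> []" using lf' by auto
      then show ?thesis using kf(5) f by simp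
    qed simp
    have "zip f' (replicate k False @ s) \<in> WS lo hi s"
      unfolding WS_def using kf lf' na hd by blast
    moreover have "\<not> (lastf (zip f' (replicate k False @ s)) \<and> d)"
      using na lf' by (simp add: lastf_zip)
    ultimately show "w \<in> (\<lambda>(w, d). w @ [(d, c)]) ` {(w, d). w \<in> WS lo hi s \<and> \<not> (lastf w \<and> d)}"
      using w by (intro image_eqI[of _ _ "(zip f' (replicate k False @ s), d)"]) auto
  qed
  show "(\<lambda>(w, d). w @ [(d, c)]) ` {(w, d). w \<in> WS lo hi s \<and> \<not> (lastf w \<and> d)} \<subseteq> WS lo hi (s @ [c])"
  proof
    fix w' assume "w' \<in> (\<lambda>(w, d). w @ [(d, c)]) ` {(w, d). w \<in> WS lo hi s \<and> \<not> (lastf w \<and> d)}"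
    then obtain w d where wd: "w \<in> WS lo hi s" "\<not> (lastf w \<and> d)" "w' = w @ [(d, c)]" by auto
    then obtain k f where kf: "lo \<le> k" "k \<le> hi" "length f = k + length s" "no_adj_ones f"
        "k = 0 \<or> hd f" "w = zip f (replicate k False @ s)" unfolding WS_def by auto
    have l: "\<not> (f \<noteq> [] \<and> last f \<and> d)" using wd kf by (simp add: lastf_zip)
    have "no_adj_ones (f @ [d])" using kf l by (auto simp: no_adj_append)
    moreover have "k = 0 \<or> hd (f @ [d])"
    proof (cases "k = 0")
      case False then have "f \<noteq> []" using kf by auto
      then show ?thesis using kf(5) by simp
    qed simp
    moreover have "w' = zip (f @ [d]) (replicate k False @ s @ [c])"
      using wd(3) kf(3,6) zip_append[of f "replicate k False @ s" "[d]" "[c]"] by simp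
    ultimately show "w' \<in> WS lo hi (s @ [c])" unfolding WS_def using kf by (intro CollectI exI[of _ k] exI[of _ "f @ [d]"]) auto
  qed
qed

definition Qs :: "dfa \<Rightarrow> (nat \<times> bool) set" where "Qs A = {..<nstates A} \<times> UNIV"

lemma finite_Qs: "finite (Qs A)" by (simp add: Qs_def)

lemma run_Qs: "dfa_wf A \<Longrightarrow> (run A w, lastf w) \<in> Qs A"
  using foldl_lt[of A "init A" w] by (simp add: Qs_def run_def dfa_wf_def)

definition Yc :: "dfa \<Rightarrow> nat \<Rightarrow> nat \<Rightarrow> bool list \<Rightarrow> nat \<times> bool \<Rightarrow> nat" where
  "Yc A lo hi s p = card {w \<in> WS lo hi s. (run A w, lastf w) = p}"

lemma cnt_Yc: "dfa_wf A \<Longrightarrow> cnt A lo hi s = (\<Sum>p\<in>{p \<in> Qs A. final A ! fst p}. Yc A lo hi s p)"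
  unfolding cnt_def Yc_def dfa_accepts_def
  using card_fibers[OF finite_WS finite_Qs, of lo hi s "\<lambda>w. (run A w, lastf w)" A "\<lambda>p. final A ! fst p"] run_Qs
  by (simp add: run_def)

lemma Yc_snoc:
  assumes wf: "dfa_wf A"
  shows "Yc A lo hi (s @ [c]) (q', l') =
    (\<Sum>p\<in>{p \<in> Qs A. \<not> (snd p \<and> l') \<and> dfa_step A (fst p) (l', c) = q'}. Yc A lo hi s p)"
proof -
  have e: "{w' \<in> WS lo hi (s @ [c]). (run A w', lastf w') = (q', l')} =
     (\<lambda>w. w @ [(l', c)]) ` {w \<in> WS lo hi s. \<not> (lastf w \<and> l') \<and> dfa_step A (run A w) (l', c) = q'}"
  proof
    show "{w' \<in> WS lo hi (s @ [c]). (run A w', lastf w') = (q', l')} \<subseteq>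
     (\<lambda>w. w @ [(l', c)]) ` {w \<in> WS lo hi s. \<not> (lastf w \<and> l') \<and> dfa_step A (run A w) (l', c) = q'}"
    proof
      fix w' assume a: "w' \<in> {w' \<in> WS lo hi (s @ [c]). (run A w', lastf w') = (q', l')}"
      then obtain w d where wd: "w \<in> WS lo hi s" "\<not> (lastf w \<and> d)" "w' = w @ [(d, c)]"
        unfolding WS_snoc by auto
      have "d = l'" using a wd by (simp add: lastf_def)
      then show "w' \<in> (\<lambda>w. w @ [(l', c)]) ` {w \<in> WS lo hi s. \<not> (lastf w \<and> l') \<and> dfa_step A (run A w) (l', c) = q'}"
        using a wd by (auto simp: run_def)
    qed
    show "(\<lambda>w. w @ [(l', c)]) ` {w \<in> WS lo hi s. \<not> (lastf w \<and> l') \<and> dfa_step A (run A w) (l', c) = q'} \<subseteq>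
        {w' \<in> WS lo hi (s @ [c]). (run A w', lastf w') = (q', l')}"
      unfolding WS_snoc by (auto simp: run_def lastf_def)
  qed
  have "Yc A lo hi (s @ [c]) (q', l') = card {w \<in> WS lo hi s. \<not> (lastf w \<and> l') \<and> dfa_step A (run A w) (l', c) = q'}"
    unfolding Yc_def e by (rule card_image) (simp add: inj_on_def)
  also have "\<dots> = card {w \<in> WS lo hi s. (\<lambda>p. \<not> (snd p \<and> l') \<and> dfa_step A (fst p) (l', c) = q') (run A w, lastf w)}"
    by simp
  also have "\<dots> = (\<Sum>p\<in>{p \<in> Qs A. \<not> (snd p \<and> l') \<and> dfa_step A (fst p) (l', c) = q'}. Yc A lo hi s p)"
    unfolding Yc_def by (rule card_fibers[OF finite_WS finite_Qs]) (rule run_Qs[OF wf])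
  finally show ?thesis .
qed

type_synonym idx = "bool \<times> bool \<times> nat \<times> bool"

definition aut :: "dfa \<Rightarrow> dfa \<Rightarrow> bool \<Rightarrow> dfa" where "aut A B x = (if x then A else B)"
definition EE :: "dfa \<Rightarrow> nat" where "EE A = 2 * nstates A + 4"
definition wlo :: "dfa \<Rightarrow> bool \<Rightarrow> nat" where "wlo A g = (if g then Suc (EE A) else 0)"
definition whi :: "dfa \<Rightarrow> bool \<Rightarrow> nat" where "whi A g = (if g then 2 * EE A else EE A)"

definition I0 :: "dfa \<Rightarrow> dfa \<Rightarrow> idx set" where
  "I0 A B = {(x, g, q, l). q < nstates (aut A B x)}"

definition Yv :: "dfa \<Rightarrow> dfa \<Rightarrow> bool list \<Rightarrow> idx \<Rightarrow> nat" where
  "Yv A B s i = (case i of (x, g, q, l) \<Rightarrow>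
     if q < nstates (aut A B x) then Yc (aut A B x) (wlo (aut A B x) g) (whi (aut A B x) g) s (q, l) else 0)"

definition MM :: "dfa \<Rightarrow> dfa \<Rightarrow> bool \<Rightarrow> idx \<Rightarrow> idx \<Rightarrow> nat" where
  "MM A B c i j = (case i of (x', g', q', l') \<Rightarrow> case j of (x, g, q, l) \<Rightarrow>
     if x = x' \<and> g = g' \<and> q < nstates (aut A B x) \<and> \<not> (l \<and> l') \<and> dfa_step (aut A B x) q (l', c) = q' then 1 else 0)"

lemma I0_alt: "I0 A B = ({True} \<times> UNIV \<times> {..<nstates A} \<times> UNIV) \<union> ({False} \<times> UNIV \<times> {..<nstates B} \<times> UNIV)"
  by (auto simp: I0_def aut_def split: if_splits)

lemma finite_I0: "finite (I0 A B)" by (simp add: I0_alt)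

lemma card_I0: "card (I0 A B) = 4 * (nstates A + nstates B)"
proof -
  have "card (I0 A B) = card ({True} \<times> (UNIV::bool set) \<times> {..<nstates A} \<times> (UNIV::bool set)) +
      card ({False} \<times> (UNIV::bool set) \<times> {..<nstates B} \<times> (UNIV::bool set))"
    unfolding I0_alt by (rule card_Un_disjoint) auto
  also have "\<dots> = 4 * (nstates A + nstates B)" by (simp add: card_cartesian_product)
  finally show ?thesis .
qed

lemma Yv_out: "i \<notin> I0 A B \<Longrightarrow> Yv A B s i = 0"
  by (cases i) (auto simp: Yv_def I0_def)

lemma Yv_snoc:
  assumes wfA: "dfa_wf A" and wfB: "dfa_wf B" and i: "i \<in> I0 A B"
  shows "Yv A B (s @ [c]) i = (\<Sum>j\<in>I0 A B. MM A B c i j * Yv A B s j)"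
proof -
  obtain x' g' q' l' where iq: "i = (x', g', q', l')" by (cases i) auto
  let ?C = "aut A B x'" and ?lo = "wlo (aut A B x') g'" and ?hi = "whi (aut A B x') g'"
  have wfC: "dfa_wf ?C" using wfA wfB by (simp add: aut_def)
  have q': "q' < nstates ?C" using i iq by (simp add: I0_def)
  define Sp where "Sp = {p \<in> Qs ?C. \<not> (snd p \<and> l') \<and> dfa_step ?C (fst p) (l', c) = q'}"
  define h where "h p = (x', g', fst p, snd p)" for p :: "nat \<times> bool"
  have hinj: "inj_on h Sp" by (auto simp: h_def inj_on_def)
  have hsub: "h ` Sp \<subseteq> I0 A B" by (auto simp: h_def Sp_def Qs_def I0_def)
  have "(\<Sum>j\<in>I0 A B. MM A B c i j * Yv A B s j) = (\<Sum>j\<in>h ` Sp. MM A B c i j * Yv A B s j)"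
  proof (rule sum.mono_neutral_right[OF finite_I0 hsub])
    show "\<forall>j\<in>I0 A B - h ` Sp. MM A B c i j * Yv A B s j = 0"
    proof
      fix j assume j: "j \<in> I0 A B - h ` Sp"
      obtain x g q l where jq: "j = (x, g, q, l)" by (cases j) auto
      show "MM A B c i j * Yv A B s j = 0"
      proof (cases "x = x' \<and> g = g' \<and> q < nstates (aut A B x) \<and> \<not> (l \<and> l') \<and> dfa_step (aut A B x) q (l', c) = q'")
        case True
        then have "j \<in> h ` Sp" using jq by (auto simp: h_def Sp_def Qs_def intro!: image_eqI[of _ _ "(q, l)"])
        then show ?thesis using j by simp
      next
        case False
        then have "MM A B c i j = 0" by (simp add: MM_def iq jq)
        then show ?thesis by simp
      qed
    qed
  qed
  also have "\<dots> = (\<Sum>p\<in>Sp. MM A B c i (h p) * Yv A B s (h p))" using sum.reindex[OF hinj] by (simp add: comp_def)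
  also have "\<dots> = (\<Sum>p\<in>Sp. Yc ?C ?lo ?hi s p)"
    by (rule sum.cong) (auto simp: MM_def iq h_def Sp_def Qs_def Yv_def)
  also have "\<dots> = Yc ?C ?lo ?hi (s @ [c]) (q', l')" unfolding Sp_def by (rule Yc_snoc[OF wfC, symmetric])
  also have "\<dots> = Yv A B (s @ [c]) i" using q' by (simp add: Yv_def iq)
  finally show ?thesis by simp
qed

definition wt :: "dfa \<Rightarrow> dfa \<Rightarrow> bool \<Rightarrow> bool \<Rightarrow> idx \<Rightarrow> nat" where
  "wt A B x g i = (case i of (x', g', q, l) \<Rightarrow> if x' = x \<and> g' = g \<and> final (aut A B x) ! q then 1 else 0)"

lemma cnt_Yv:
  assumes wfA: "dfa_wf A" and wfB: "dfa_wf B"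
  shows "cnt (aut A B x) (wlo (aut A B x) g) (whi (aut A B x) g) s = (\<Sum>i\<in>I0 A B. wt A B x g i * Yv A B s i)"
proof -
  let ?C = "aut A B x" and ?lo = "wlo (aut A B x) g" and ?hi = "whi (aut A B x) g"
  have wfC: "dfa_wf ?C" using wfA wfB by (simp add: aut_def)
  define Sp where "Sp = {p \<in> Qs ?C. final ?C ! fst p}"
  define h where "h p = (x, g, fst p, snd p)" for p :: "nat \<times> bool"
  have hinj: "inj_on h Sp" by (auto simp: h_def inj_on_def)
  have hsub: "h ` Sp \<subseteq> I0 A B" by (auto simp: h_def Sp_def Qs_def I0_def)
  have "(\<Sum>i\<in>I0 A B. wt A B x g i * Yv A B s i) = (\<Sum>i\<in>h ` Sp. wt A B x g i * Yv A B s i)"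
  proof (rule sum.mono_neutral_right[OF finite_I0 hsub])
    show "\<forall>j\<in>I0 A B - h ` Sp. wt A B x g j * Yv A B s j = 0"
    proof
      fix j assume j: "j \<in> I0 A B - h ` Sp"
      obtain x' g' q l where jq: "j = (x', g', q, l)" by (cases j) auto
      show "wt A B x g j * Yv A B s j = 0"
      proof (cases "x' = x \<and> g' = g \<and> final (aut A B x) ! q")
        case True
        then have "j \<in> h ` Sp" using jq j by (auto simp: h_def Sp_def Qs_def I0_def intro!: image_eqI[of _ _ "(q, l)"])
        then show ?thesis using j by simp
      next
        case False
        then have "wt A B x g j = 0" by (auto simp: wt_def jq)
        then show ?thesis by simp
      qed
    qed
  qed
  also have "\<dots> = (\<Sum>p\<in>Sp. wt A B x g (h p) * Yv A B s (h p))" using sum.reindex[OF hinj] by (simp add: comp_def)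
  also have "\<dots> = (\<Sum>p\<in>Sp. Yc ?C ?lo ?hi s p)"
    by (rule sum.cong) (auto simp: wt_def h_def Sp_def Qs_def Yv_def)
  also have "\<dots> = cnt ?C ?lo ?hi s" unfolding Sp_def by (rule cnt_Yc[OF wfC, symmetric])
  finally show ?thesis by simp
qed

definition supp :: "dfa \<Rightarrow> dfa \<Rightarrow> bool list \<Rightarrow> idx set" where
  "supp A B s = {i \<in> I0 A B. Yv A B s i \<noteq> 0}"

definition st :: "bool list \<Rightarrow> nat" where
  "st s = (if s = [] then 0 else if canon s then (if last s then 2 else 1) else 3)"

definition dst :: "nat \<Rightarrow> bool \<Rightarrow> nat" where
  "dst t c = (if t = 0 then (if c then 2 else 3) else if t = 1 then (if c then 2 else 1)
     else if t = 2 then (if c then 3 else 1) else 3)"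

lemma canon_snoc: "canon (s @ [c]) \<longleftrightarrow> (s = [] \<and> c) \<or> (s \<noteq> [] \<and> canon s \<and> \<not> (last s \<and> c))"
  by (cases "s = []") (auto simp: canon_def no_adj_append)

lemma st_snoc: "st (s @ [c]) = dst (st s) c"
  by (auto simp: st_def dst_def canon_snoc)

lemma st_lt: "st s < 4" by (simp add: st_def)

lemma st_canon: "st s \<noteq> 3 \<longleftrightarrow> canon s"
  by (auto simp: st_def canon_def)

definition sig :: "dfa \<Rightarrow> dfa \<Rightarrow> bool list \<Rightarrow> idx set \<times> nat" where
  "sig A B s = (supp A B s, st s)"

definition dsupp :: "dfa \<Rightarrow> dfa \<Rightarrow> idx set \<Rightarrow> bool \<Rightarrow> idx set" where
  "dsupp A B S c = {i \<in> I0 A B. \<exists>j\<in>S. MM A B c i j \<noteq> 0}"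

definition dl :: "dfa \<Rightarrow> dfa \<Rightarrow> idx set \<times> nat \<Rightarrow> bool \<Rightarrow> idx set \<times> nat" where
  "dl A B \<tau> c = (dsupp A B (fst \<tau>) c, dst (snd \<tau>) c)"

definition S0 :: "dfa \<Rightarrow> dfa \<Rightarrow> (idx set \<times> nat) set" where
  "S0 A B = Pow (I0 A B) \<times> {..<4}"

lemma finite_S0: "finite (S0 A B)" by (simp add: S0_def finite_I0)

lemma sig_S0: "sig A B s \<in> S0 A B" by (auto simp: sig_def S0_def supp_def st_lt)

lemma supp_snoc:
  assumes wfA: "dfa_wf A" and wfB: "dfa_wf B"
  shows "supp A B (s @ [c]) = dsupp A B (supp A B s) c"
proof -
  have key: "i \<in> I0 A B \<Longrightarrow> Yv A B (s @ [c]) i \<noteq> 0 \<longleftrightarrow> (\<exists>j\<in>supp A B s. MM A B c i j \<noteq> 0)" for i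
    using Yv_snoc[OF wfA wfB] by (auto simp: supp_def finite_I0)
  show ?thesis unfolding dsupp_def supp_def[of A B "s @ [c]"] using key by blast
qed

lemma sig_snoc: "dfa_wf A \<Longrightarrow> dfa_wf B \<Longrightarrow> sig A B (s @ [c]) = dl A B (sig A B s) c"
  by (simp add: sig_def dl_def supp_snoc st_snoc)

definition XX :: "dfa \<Rightarrow> dfa \<Rightarrow> bool list \<Rightarrow> (idx set \<times> nat) \<times> idx \<Rightarrow> real" where
  "XX A B s p = (if fst p = sig A B s \<and> snd p \<in> I0 A B then real (Yv A B s (snd p)) else 0)"

definition LL :: "dfa \<Rightarrow> dfa \<Rightarrow> bool \<Rightarrow> ((idx set \<times> nat) \<times> idx \<Rightarrow> real) \<Rightarrow> (idx set \<times> nat) \<times> idx \<Rightarrow> real" where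
  "LL A B c X p = (if snd p \<in> I0 A B then
     (\<Sum>\<tau>\<in>S0 A B. if dl A B \<tau> c = fst p then (\<Sum>j\<in>I0 A B. real (MM A B c (snd p) j) * X (\<tau>, j)) else 0) else 0)"

lemma LL_add: "LL A B c (x + y) = LL A B c x + LL A B c y"
  by (auto simp: fun_eq_iff LL_def plus_fun_def algebra_simps sum.distrib[symmetric] intro!: sum.cong)

lemma LL_sc: "LL A B c (\<lambda>i. r * x i) = (\<lambda>i. r * LL A B c x i)"
  by (auto simp: fun_eq_iff LL_def sum_distrib_left algebra_simps intro!: sum.cong)

lemma XX_snoc:
  assumes wfA: "dfa_wf A" and wfB: "dfa_wf B"
  shows "XX A B (s @ [c]) = LL A B c (XX A B s)"
proof
  fix p :: "(idx set \<times> nat) \<times> idx"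
  obtain \<tau>' i where p: "p = (\<tau>', i)" by (cases p) auto
  show "XX A B (s @ [c]) p = LL A B c (XX A B s) p"
  proof (cases "i \<in> I0 A B")
    case False then show ?thesis by (simp add: p XX_def LL_def)
  next
    case True
    have "LL A B c (XX A B s) p = (\<Sum>\<tau>\<in>S0 A B. if \<tau> = sig A B s then
        (if dl A B \<tau> c = \<tau>' then (\<Sum>j\<in>I0 A B. real (MM A B c i j) * real (Yv A B s j)) else 0) else 0)"
      using True by (auto simp: p LL_def XX_def intro!: sum.cong)
    also have "\<dots> = (if dl A B (sig A B s) c = \<tau>' then (\<Sum>j\<in>I0 A B. real (MM A B c i j) * real (Yv A B s j)) else 0)"
      using sig_S0[of A B s] by (simp add: finite_S0)
    also have "\<dots> = XX A B (s @ [c]) p"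
      using True Yv_snoc[OF wfA wfB True, of s c] by (simp add: p XX_def sig_snoc[OF wfA wfB])
    finally show ?thesis by simp
  qed
qed

lemma XX_fold:
  assumes wfA: "dfa_wf A" and wfB: "dfa_wf B"
  shows "foldl (\<lambda>x c. LL A B c x) (XX A B []) s = XX A B s"
proof (induction s rule: rev_induct)
  case Nil then show ?case by simp
next
  case (snoc c s) then show ?case by (simp add: XX_snoc[OF wfA wfB])
qed

definition BB :: "dfa \<Rightarrow> dfa \<Rightarrow> ((idx set \<times> nat) \<times> idx \<Rightarrow> real) set" where
  "BB A B = (\<lambda>p q. if q = p then 1 else 0) ` (S0 A B \<times> I0 A B)"

lemma sum_fun_apply: "(\<Sum>p\<in>P. f p) q = (\<Sum>p\<in>P. f p q)"
  by (induction P rule: infinite_finite_induct) (auto simp: plus_fun_def zero_fun_def)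

lemma XX_span: "XX A B s \<in> fv.span (BB A B)"
proof -
  let ?e = "\<lambda>p q. if q = p then 1 else (0::real)"
  have "XX A B s = (\<Sum>p\<in>S0 A B \<times> I0 A B. (\<lambda>q. XX A B s p * ?e p q))"
  proof
    fix q
    have "(\<Sum>p\<in>S0 A B \<times> I0 A B. (\<lambda>q. XX A B s p * ?e p q)) q = (\<Sum>p\<in>S0 A B \<times> I0 A B. XX A B s p * ?e p q)"
      by (rule sum_fun_apply)
    also have "\<dots> = (\<Sum>p\<in>S0 A B \<times> I0 A B. if q = p then XX A B s p else 0)"
      by (rule sum.cong) auto
    also have "\<dots> = (if q \<in> S0 A B \<times> I0 A B then XX A B s q else 0)"
      by (simp add: finite_S0 finite_I0)
    also have "\<dots> = XX A B s q"
      using sig_S0[of A B s] by (cases q) (auto simp: XX_def)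
    finally show "XX A B s q = (\<Sum>p\<in>S0 A B \<times> I0 A B. (\<lambda>q. XX A B s p * ?e p q)) q" by simp
  qed
  also have "\<dots> \<in> fv.span (BB A B)"
  proof (rule fv.span_sum)
    fix p assume "p \<in> S0 A B \<times> I0 A B"
    then have "?e p \<in> fv.span (BB A B)" by (intro fv.span_base) (auto simp: BB_def)
    then show "(\<lambda>q. XX A B s p * ?e p q) \<in> fv.span (BB A B)" by (rule fv.span_scale)
  qed
  finally show ?thesis .
qed

lemma card_BB: "card (BB A B) \<le> 4 * 2 ^ (4 * (nstates A + nstates B)) * (4 * (nstates A + nstates B))"
proof -
  have "card (BB A B) \<le> card (S0 A B \<times> I0 A B)" unfolding BB_def by (rule card_image_le) (simp add: finite_S0 finite_I0)
  also have "\<dots> = card (S0 A B) * card (I0 A B)" by (simp add: card_cartesian_product)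
  also have "card (S0 A B) = 2 ^ card (I0 A B) * 4" by (simp add: S0_def card_cartesian_product card_Pow finite_I0)
  finally show ?thesis by (simp add: card_I0 mult.commute mult.left_commute)
qed

definition infS :: "dfa \<Rightarrow> dfa \<Rightarrow> bool \<Rightarrow> idx set \<Rightarrow> bool" where
  "infS A B x S \<longleftrightarrow> (\<exists>i\<in>S. wt A B x True i \<noteq> 0)"

definition Good :: "dfa \<Rightarrow> dfa \<Rightarrow> (idx set \<times> nat) set" where
  "Good A B = {\<tau>. snd \<tau> \<noteq> 3 \<and> \<not> infS A B True (fst \<tau>) \<and> \<not> infS A B False (fst \<tau>)}"
definition Bad :: "dfa \<Rightarrow> dfa \<Rightarrow> (idx set \<times> nat) set" where
  "Bad A B = {\<tau>. snd \<tau> \<noteq> 3 \<and> (infS A B True (fst \<tau>) \<noteq> infS A B False (fst \<tau>))}"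

definition lam :: "dfa \<Rightarrow> dfa \<Rightarrow> idx \<Rightarrow> real" where
  "lam A B i = real (wt A B True False i) - real (wt A B False False i)"

definition Ph1 :: "dfa \<Rightarrow> dfa \<Rightarrow> ((idx set \<times> nat) \<times> idx \<Rightarrow> real) \<Rightarrow> real" where
  "Ph1 A B X = (\<Sum>\<tau>\<in>S0 A B \<inter> Good A B. \<Sum>i\<in>I0 A B. lam A B i * X (\<tau>, i))"
definition Ph2 :: "dfa \<Rightarrow> dfa \<Rightarrow> ((idx set \<times> nat) \<times> idx \<Rightarrow> real) \<Rightarrow> real" where
  "Ph2 A B X = (\<Sum>\<tau>\<in>S0 A B \<inter> Bad A B. \<Sum>i\<in>I0 A B. X (\<tau>, i))"

lemma Ph1_add: "Ph1 A B (x + y) = Ph1 A B x + Ph1 A B y"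
  by (simp add: Ph1_def plus_fun_def algebra_simps sum.distrib)
lemma Ph1_sc: "Ph1 A B (\<lambda>i. r * x i) = r * Ph1 A B x"
  by (simp add: Ph1_def sum_distrib_left algebra_simps)
lemma Ph2_add: "Ph2 A B (x + y) = Ph2 A B x + Ph2 A B y"
  by (simp add: Ph2_def plus_fun_def algebra_simps sum.distrib)
lemma Ph2_sc: "Ph2 A B (\<lambda>i. r * x i) = r * Ph2 A B x"
  by (simp add: Ph2_def sum_distrib_left algebra_simps)

lemma Ph1_XX: "Ph1 A B (XX A B s) = (if sig A B s \<in> Good A B then (\<Sum>i\<in>I0 A B. lam A B i * real (Yv A B s i)) else 0)"
proof -
  have "Ph1 A B (XX A B s) = (\<Sum>\<tau>\<in>S0 A B \<inter> Good A B. if sig A B s = \<tau> then (\<Sum>i\<in>I0 A B. lam A B i * real (Yv A B s i)) else 0)"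
    unfolding Ph1_def by (rule sum.cong) (auto simp: XX_def intro!: sum.cong)
  also have "\<dots> = (if sig A B s \<in> S0 A B \<inter> Good A B then (\<Sum>i\<in>I0 A B. lam A B i * real (Yv A B s i)) else 0)"
    by (rule sum.delta') (simp add: finite_S0)
  finally show ?thesis using sig_S0[of A B s] by simp
qed

lemma Ph2_XX: "Ph2 A B (XX A B s) = (if sig A B s \<in> Bad A B then (\<Sum>i\<in>I0 A B. real (Yv A B s i)) else 0)"
proof -
  have "Ph2 A B (XX A B s) = (\<Sum>\<tau>\<in>S0 A B \<inter> Bad A B. if sig A B s = \<tau> then (\<Sum>i\<in>I0 A B. real (Yv A B s i)) else 0)"
    unfolding Ph2_def by (rule sum.cong) (auto simp: XX_def intro!: sum.cong)
  also have "\<dots> = (if sig A B s \<in> S0 A B \<inter> Bad A B then (\<Sum>i\<in>I0 A B. real (Yv A B s i)) else 0)"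
    by (rule sum.delta') (simp add: finite_S0)
  finally show ?thesis using sig_S0[of A B s] by simp
qed

lemma wt01: "wt A B x g i \<le> 1" by (cases i) (simp add: wt_def)

lemma infS_supp: "infS A B x (supp A B s) \<longleftrightarrow> (\<Sum>i\<in>I0 A B. wt A B x True i * Yv A B s i) \<noteq> 0"
  by (auto simp: infS_def supp_def finite_I0)

lemma lam_sum: "(\<Sum>i\<in>I0 A B. lam A B i * real (Yv A B s i)) =
    real (\<Sum>i\<in>I0 A B. wt A B True False i * Yv A B s i) - real (\<Sum>i\<in>I0 A B. wt A B False False i * Yv A B s i)"
  by (simp add: lam_def algebra_simps sum_subtractf)

lemma sum_wt_le: "(\<Sum>i\<in>I0 A B. wt A B x g i * Yv A B s i) \<le> (\<Sum>i\<in>I0 A B. Yv A B s i)"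
  by (rule sum_mono) (use wt01 in \<open>simp add: mult_le_cancel2\<close>)

lemma aut_simps[simp]: "aut A B True = A" "aut A B False = B" by (simp_all add: aut_def)

lemma eqw_Ph:
  assumes sa: "fib_synchronized_by A a" and sb: "fib_synchronized_by B b"
  shows "\<not> eqw (dfa_code A) (dfa_code B) v \<longleftrightarrow> Ph1 A B (XX A B (fib_rep v)) \<noteq> 0 \<or> Ph2 A B (XX A B (fib_rep v)) \<noteq> 0"
proof -
  let ?s = "fib_rep v"
  have wfA: "dfa_wf A" and wfB: "dfa_wf B" using sa sb sync_wf by auto
  define iA where "iA = (\<Sum>i\<in>I0 A B. wt A B True True i * Yv A B ?s i)"
  define iB where "iB = (\<Sum>i\<in>I0 A B. wt A B False True i * Yv A B ?s i)"
  define cA where "cA = (\<Sum>i\<in>I0 A B. wt A B True False i * Yv A B ?s i)"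
  define cB where "cB = (\<Sum>i\<in>I0 A B. wt A B False False i * Yv A B ?s i)"
  have e1: "infc (dfa_code A) (length ?s) v = iA"
    using infc_cnt[OF sa, of v] cnt_Yv[OF wfA wfB, of True True ?s] by (simp add: iA_def wlo_def whi_def EE_def)
  have e2: "infc (dfa_code B) (length ?s) v = iB"
    using infc_cnt[OF sb, of v] cnt_Yv[OF wfA wfB, of False True ?s] by (simp add: iB_def wlo_def whi_def EE_def)
  have e3: "cntw (dfa_code A) (length ?s) v = cA"
    using cntw_cnt[OF sa, of v] cnt_Yv[OF wfA wfB, of True False ?s] by (simp add: cA_def wlo_def whi_def EE_def)
  have e4: "cntw (dfa_code B) (length ?s) v = cB"
    using cntw_cnt[OF sb, of v] cnt_Yv[OF wfA wfB, of False False ?s] by (simp add: cB_def wlo_def whi_def EE_def)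
  have eq: "eqw (dfa_code A) (dfa_code B) v \<longleftrightarrow> (iA \<noteq> 0 \<and> iB \<noteq> 0) \<or> (iA = 0 \<and> iB = 0 \<and> cA = cB)"
    using e1 e2 e3 e4 by (simp add: eqw_def Let_def zlen_eq)
  have st: "st ?s \<noteq> 3" using st_canon fib_rep_canon by blast
  have good: "sig A B ?s \<in> Good A B \<longleftrightarrow> iA = 0 \<and> iB = 0"
    using st by (simp add: Good_def sig_def infS_supp iA_def iB_def)
  have bad: "sig A B ?s \<in> Bad A B \<longleftrightarrow> (iA \<noteq> 0) \<noteq> (iB \<noteq> 0)"
    using st by (simp add: Bad_def sig_def infS_supp iA_def iB_def)
  have ls: "(\<Sum>i\<in>I0 A B. lam A B i * real (Yv A B ?s i)) = real cA - real cB"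
    unfolding cA_def cB_def by (rule lam_sum)
  have p1: "Ph1 A B (XX A B ?s) \<noteq> 0 \<longleftrightarrow> iA = 0 \<and> iB = 0 \<and> cA \<noteq> cB"
    using good by (simp add: Ph1_XX ls)
  have "iA \<le> (\<Sum>i\<in>I0 A B. Yv A B ?s i)" "iB \<le> (\<Sum>i\<in>I0 A B. Yv A B ?s i)"
    unfolding iA_def iB_def by (rule sum_wt_le)+
  then have p2: "Ph2 A B (XX A B ?s) \<noteq> 0 \<longleftrightarrow> (iA \<noteq> 0) \<noteq> (iB \<noteq> 0)"
    using bad by (auto simp: Ph2_XX simp flip: of_nat_sum)
  show ?thesis using eq p1 p2 by auto
qed

lemma Ph_noncanon: "\<not> canon s \<Longrightarrow> Ph1 A B (XX A B s) = 0 \<and> Ph2 A B (XX A B s) = 0"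
  using st_canon[of s] by (simp add: Ph1_XX Ph2_XX sig_def Good_def Bad_def)

theorem bound_thm:
  assumes sa: "fib_synchronized_by A a" and sb: "fib_synchronized_by B b"
    and small: "\<forall>v<fib (Kf (dfa_code A) (dfa_code B) + 2). eqw (dfa_code A) (dfa_code B) v"
  shows "eqw (dfa_code A) (dfa_code B) v"
proof (rule ccontr)
  assume nv: "\<not> eqw (dfa_code A) (dfa_code B) v"
  have wfA: "dfa_wf A" and wfB: "dfa_wf B" using sa sb sync_wf by auto
  have K: "Kf (dfa_code A) (dfa_code B) = 4 * 2 ^ (4 * (nstates A + nstates B)) * (4 * (nstates A + nstates B))"
    by (simp add: Kf_def lnth_code(1)[OF wfA] lnth_code(1)[OF wfB] Let_def)
  have fold: "foldl (\<lambda>x c. LL A B c x) (XX A B []) s = XX A B s" for s by (rule XX_fold[OF wfA wfB])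
  have gen: "\<exists>s. length s \<le> card (BB A B) \<and> P (XX A B s) \<noteq> 0"
    if Padd: "\<And>x y. P (x + y) = P x + P y" and Psc: "\<And>r x. P (\<lambda>i. r * x i) = r * P x"
      and ex: "P (XX A B s0) \<noteq> 0" for P s0
  proof -
    have "\<exists>s. length s \<le> card (BB A B) \<and> P (foldl (\<lambda>x c. LL A B c x) (XX A B []) s) \<noteq> 0"
    proof (rule bound_lemma[where L = "LL A B"])
      show "\<And>c x y. LL A B c (x + y) = LL A B c x + LL A B c y" by (rule LL_add)
      show "\<And>c r x. LL A B c (\<lambda>i. r * x i) = (\<lambda>i. r * LL A B c x i)" by (rule LL_sc)
      show "finite (BB A B)" by (simp add: BB_def finite_S0 finite_I0)
      show "\<And>s. foldl (\<lambda>x c. LL A B c x) (XX A B []) s \<in> fv.span (BB A B)" by (simp add: fold XX_span)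
      show "P (foldl (\<lambda>x c. LL A B c x) (XX A B []) s0) \<noteq> 0" using ex by (simp add: fold)
    qed (fact Padd Psc)+
    then show ?thesis by (simp add: fold)
  qed
  have "Ph1 A B (XX A B (fib_rep v)) \<noteq> 0 \<or> Ph2 A B (XX A B (fib_rep v)) \<noteq> 0" using eqw_Ph[OF sa sb] nv by blast
  then obtain s where s: "length s \<le> card (BB A B)" "Ph1 A B (XX A B s) \<noteq> 0 \<or> Ph2 A B (XX A B s) \<noteq> 0"
  proof
    assume "Ph1 A B (XX A B (fib_rep v)) \<noteq> 0"
    then obtain s where "length s \<le> card (BB A B)" "Ph1 A B (XX A B s) \<noteq> 0"
      using gen[where P="Ph1 A B", OF Ph1_add Ph1_sc] by blast
    then show ?thesis using that by blast
  next
    assume "Ph2 A B (XX A B (fib_rep v)) \<noteq> 0"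
    then obtain s where "length s \<le> card (BB A B)" "Ph2 A B (XX A B s) \<noteq> 0"
      using gen[where P="Ph2 A B", OF Ph2_add Ph2_sc] by blast
    then show ?thesis using that by blast
  qed
  have cs: "canon s" using s(2) Ph_noncanon by blast
  define v' where "v' = zeck_val s"
  have rs: "fib_rep v' = s" using fib_rep_zeck[OF cs] by (simp add: v'_def)
  have "\<not> eqw (dfa_code A) (dfa_code B) v'" using eqw_Ph[OF sa sb, of v'] s(2) rs by simp
  moreover have "length (fib_rep v') \<le> Kf (dfa_code A) (dfa_code B)" using rs s(1) card_BB[of A B] K by simp
  then have "v' < fib (Kf (dfa_code A) (dfa_code B) + 2)" using hi_iff by blast
  ultimately show False using small by blast
qed

theorem theorem10:
  shows "\<exists>f :: recf. \<forall>A B a b.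
           fib_synchronized_by A a \<longrightarrow> fib_synchronized_by B b \<longrightarrow>
           rf_eval f [dfa_code A, dfa_code B] (if is_perm_of a b then 1 else 0)"
proof (intro exI allI impI)
  fix A B a b
  assume sa: "fib_synchronized_by A a" and sb: "fib_synchronized_by B b"
  have "is_perm_of a b \<longleftrightarrow> (\<forall>v<fib (Kf (dfa_code A) (dfa_code B) + 2). eqw (dfa_code A) (dfa_code B) v)"
  proof
    assume "is_perm_of a b"
    then show "\<forall>v<fib (Kf (dfa_code A) (dfa_code B) + 2). eqw (dfa_code A) (dfa_code B) v"
      using perm_iff_fibeq eqw_fibeq[OF sa sb] by blast
  next
    assume "\<forall>v<fib (Kf (dfa_code A) (dfa_code B) + 2). eqw (dfa_code A) (dfa_code B) v"
    then have "\<forall>v. eqw (dfa_code A) (dfa_code B) v" using bound_thm[OF sa sb] by blast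
    then show "is_perm_of a b" using perm_iff_fibeq eqw_fibeq[OF sa sb] by blast
  qed
  then show "rf_eval r_decide [dfa_code A, dfa_code B] (if is_perm_of a b then 1 else 0)"
    using r_decide_correct[of "dfa_code A" "dfa_code B"] by simp
qed

end
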